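(* Let $\mathcal U$ be a universal Martin-Löf test. Then $\mathsf{LAY}_{\mathcal U}\le_{\mathrm{sW}}\mathrm{C}_{\mathbb N}$ and $\mathrm{C}_{\mathbb N}\not\le_{\mathrm W}\mathsf{LAY}_{\mathcal U}$.
   Context: Cantor space $2^\omega$, Lebesgue measure $\lambda$. A Martin-Löf (ML) test is a sequence $(\mathcal V_i)_{i\in\omega}$ of open subsets of $2^\omega$ such that $\{\langle i,\sigma\rangle:[\sigma]\subseteq\mathcal V_i\}$ is c.e. and $\lambda(\mathcal V_i)\le 2^{-i}$; it is universal if $\bigcap_i\mathcal V'_i\subseteq\bigcap_i\mathcal V_i$ for every ML-test $\mathcal V'$. $\mathrm{MLR}$ is the set of Martin-Löf random sequences. A representation of a set $X$ is a surjective partial map $\delta_X:\subseteq\omega^\omega\to X$. A realizer of a multi-valued partial function $f:\subseteq X\rightrightarrows Y$ is a partial $\Gamma:\subseteq\omega^\omega\to\omega^\omega$ with $\delta_Y(\Gamma(p))\in f(\delta_X(p))$ for all $p\in\mathrm{dom}(f\circ\delta_X)$. $f\le_{\mathrm W} g$ if there are Turing functionals $\Phi,\Psi$ such that $p\mapsto\Psi(\langle p,\Gamma(\Phi(p))\rangle)$ realizes $f$ for every realizer $\Gamma$ of $g$; $f\le_{\mathrm{sW}} g$ if instead $\Psi\circ\Gamma\circ\Phi$ realizes $f$ for every realizer $\Gamma$ of $g$. $\mathrm{MLR}$ is represented by the identity on $\mathrm{MLR}\subseteq\omega^\omega$, $\omega$ by $\chi_{\{n\}}\mapsto n$, and $\omega^\omega$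 by the identity. $\mathsf{LAY}_{\mathcal U}\colon\mathrm{MLR}\rightrightarrows\omega$, $\mathsf{LAY}_{\mathcal U}(X)=\{i:X\notin\mathcal U_i\}$. $\mathrm{C}_{\mathbb N}\colon\subseteq\omega^\omega\rightrightarrows\omega$ has domain $\{f\in\omega^\omega:\exists n\,\forall k\,(f(k)\ne n+1)\}$ and $\mathrm{C}_{\mathbb N}(f)=\omega\setminus\{n:\exists k\,(f(k)=n+1)\}$. *)

theory Defs
  imports "HOL-Probability.Probability" "HOL-Library.Nat_Bijection"
begin

datatype recf = Zero | Succ | Proj nat | Comp recf "recf list" | PrimRec recf recf | Mn recf

definition arg :: "nat list \<Rightarrow> nat \<Rightarrow> nat" where
  "arg xs i = (if i < length xs then xs ! i else 0)"

inductive eval :: "recf \<Rightarrow> nat list \<Rightarrow> nat \<Rightarrow> bool" where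
  eval_zero: "eval Zero xs 0"
| eval_succ: "eval Succ xs (Suc (arg xs 0))"
| eval_proj: "eval (Proj i) xs (arg xs i)"
| eval_comp: "list_all2 (\<lambda>g y. eval g xs y) gs ys \<Longrightarrow> eval f ys z \<Longrightarrow> eval (Comp f gs) xs z"
| eval_pr0: "eval g xs z \<Longrightarrow> eval (PrimRec g h) (0 # xs) z"
| eval_prS: "eval (PrimRec g h) (n # xs) y \<Longrightarrow> eval h (n # y # xs) z \<Longrightarrow> eval (PrimRec g h) (Suc n # xs) z"
| eval_mn: "eval f (n # xs) 0 \<Longrightarrow> (\<forall>m<n. \<exists>y. eval f (m # xs) (Suc y)) \<Longrightarrow> eval (Mn f) xs n"

definition ce :: "nat set \<Rightarrow> bool" where
  "ce A \<longleftrightarrow> (\<exists>f. \<forall>x. x \<in> A \<longleftrightarrow> (\<exists>y. eval f [x] y))"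

type_synonym baire = "nat \<Rightarrow> nat"

definition prefix_of :: "nat list \<Rightarrow> baire \<Rightarrow> bool" where
  "prefix_of \<sigma> p \<longleftrightarrow> \<sigma> = map p [0..<length \<sigma>]"

definition code3 :: "nat list \<Rightarrow> nat \<Rightarrow> nat \<Rightarrow> nat" where
  "code3 \<sigma> n m = prod_encode (list_encode \<sigma>, prod_encode (n, m))"

text \<open>The partial functional determined by a c.e. set W of triples (sigma, n, m):
  Phi(p) = q iff for all n, q(n) is the (unique) m such that some prefix of p is
  enumerated with (n, m) in W.\<close>
definition tf_rel :: "nat set \<Rightarrow> baire \<Rightarrow> baire \<Rightarrow> bool" where
  "tf_rel W p q \<longleftrightarrow> (\<forall>n m. q n = m \<longleftrightarrow> (\<exists>\<sigma>. prefix_of \<sigma> p \<and> code3 \<sigma> n m \<in> W))"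

definition turing_functional :: "(baire \<Rightarrow> baire option) \<Rightarrow> bool" where
  "turing_functional \<Phi> \<longleftrightarrow> (\<exists>W. ce W \<and> (\<forall>p q. \<Phi> p = Some q \<longleftrightarrow> tf_rel W p q))"

definition bpair :: "baire \<Rightarrow> baire \<Rightarrow> baire" where
  "bpair p q = (\<lambda>n. if even n then p (n div 2) else q (n div 2))"

text \<open>f : X \<rightrightarrows> Y with domain D, representations dX, dY (partial surjections).\<close>
definition realizer ::
  "(baire \<Rightarrow> 'x option) \<Rightarrow> (baire \<Rightarrow> 'y option) \<Rightarrow> 'x set \<Rightarrow> ('x \<Rightarrow> 'y set)
     \<Rightarrow> (baire \<Rightarrow> baire option) \<Rightarrow> bool" where
  "realizer dX dY D f \<Gamma> \<longleftrightarrow>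
     (\<forall>p x. dX p = Some x \<and> x \<in> D \<longrightarrow> (\<exists>r y. \<Gamma> p = Some r \<and> dY r = Some y \<and> y \<in> f x))"

definition weihrauch_le ::
  "(baire \<Rightarrow> 'x option) \<Rightarrow> (baire \<Rightarrow> 'y option) \<Rightarrow> 'x set \<Rightarrow> ('x \<Rightarrow> 'y set) \<Rightarrow>
   (baire \<Rightarrow> 'u option) \<Rightarrow> (baire \<Rightarrow> 'v option) \<Rightarrow> 'u set \<Rightarrow> ('u \<Rightarrow> 'v set) \<Rightarrow> bool" where
  "weihrauch_le dX dY Df f dU dV Dg g \<longleftrightarrow>
     (\<exists>\<Phi> \<Psi>. turing_functional \<Phi> \<and> turing_functional \<Psi> \<and>
        (\<forall>\<Gamma>. realizer dU dV Dg g \<Gamma> \<longrightarrow>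
           realizer dX dY Df f
             (\<lambda>p. Option.bind (\<Phi> p) (\<lambda>p'. Option.bind (\<Gamma> p') (\<lambda>r. \<Psi> (bpair p r))))))"

definition strong_weihrauch_le ::
  "(baire \<Rightarrow> 'x option) \<Rightarrow> (baire \<Rightarrow> 'y option) \<Rightarrow> 'x set \<Rightarrow> ('x \<Rightarrow> 'y set) \<Rightarrow>
   (baire \<Rightarrow> 'u option) \<Rightarrow> (baire \<Rightarrow> 'v option) \<Rightarrow> 'u set \<Rightarrow> ('u \<Rightarrow> 'v set) \<Rightarrow> bool" where
  "strong_weihrauch_le dX dY Df f dU dV Dg g \<longleftrightarrow>
     (\<exists>\<Phi> \<Psi>. turing_functional \<Phi> \<and> turing_functional \<Psi> \<and>
        (\<forall>\<Gamma>. realizer dU dV Dg g \<Gamma> \<longrightarrow>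
           realizer dX dY Df f
             (\<lambda>p. Option.bind (\<Phi> p) (\<lambda>p'. Option.bind (\<Gamma> p') \<Psi>))))"

definition cantor :: "baire set" where
  "cantor = {X. \<forall>n. X n \<in> {0, 1}}"

definition lam :: "baire measure" where
  "lam = PiM UNIV (\<lambda>_. measure_pmf (pmf_of_set {0, 1::nat}))"

definition binary :: "nat list \<Rightarrow> bool" where
  "binary \<sigma> \<longleftrightarrow> set \<sigma> \<subseteq> {0, 1}"

definition cyl :: "nat list \<Rightarrow> baire set" where
  "cyl \<sigma> = {X \<in> cantor. prefix_of \<sigma> X}"

definition cantor_open :: "baire set \<Rightarrow> bool" where
  "cantor_open V \<longleftrightarrow> V \<subseteq> cantor \<and> (\<forall>X\<in>V. \<exists>\<sigma>. binary \<sigma> \<and> prefix_of \<sigma> X \<and> cyl \<sigma> \<subseteq> V)"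

definition MLtest :: "(nat \<Rightarrow> baire set) \<Rightarrow> bool" where
  "MLtest V \<longleftrightarrow> (\<forall>i. cantor_open (V i)) \<and>
     ce {prod_encode (i, list_encode \<sigma>) | i \<sigma>. binary \<sigma> \<and> cyl \<sigma> \<subseteq> V i} \<and>
     (\<forall>i. emeasure lam (V i) \<le> ennreal ((1/2) ^ i))"

definition universal_MLtest :: "(nat \<Rightarrow> baire set) \<Rightarrow> bool" where
  "universal_MLtest U \<longleftrightarrow> MLtest U \<and> (\<forall>V. MLtest V \<longrightarrow> (\<Inter>i. V i) \<subseteq> (\<Inter>i. U i))"

definition MLR :: "baire set" where
  "MLR = {X \<in> cantor. \<forall>V. MLtest V \<longrightarrow> X \<notin> (\<Inter>i. V i)}"

definition rep_MLR :: "baire \<Rightarrow> baire option" where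
  "rep_MLR p = (if p \<in> MLR then Some p else None)"

definition rep_nat :: "baire \<Rightarrow> nat option" where
  "rep_nat p = (if \<exists>n. p = (\<lambda>k. if k = n then 1 else 0)
                then Some (THE n. p = (\<lambda>k. if k = n then 1 else 0)) else None)"

definition rep_baire :: "baire \<Rightarrow> baire option" where
  "rep_baire p = Some p"

definition LAY :: "(nat \<Rightarrow> baire set) \<Rightarrow> baire \<Rightarrow> nat set" where
  "LAY U X = {i. X \<notin> U i}"

definition CN_dom :: "baire set" where
  "CN_dom = {f. \<exists>n. \<forall>k. f k \<noteq> n + 1}"

definition CN :: "baire \<Rightarrow> nat set" where
  "CN f = UNIV - {n. \<exists>k. f k = n + 1}"

end

theory Submission
  imports Defs
begin


definition rf :: "nat \<Rightarrow> (nat list \<Rightarrow> nat) \<Rightarrow> bool" where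
  "rf k F \<longleftrightarrow> (\<exists>g. \<forall>xs. length xs = k \<longrightarrow> eval g xs (F xs))"

lemma rf_cong: "rf k F \<Longrightarrow> (\<And>xs. length xs = k \<Longrightarrow> F xs = G xs) \<Longrightarrow> rf k G"
  unfolding rf_def by metis

lemma rf_const: "rf k (\<lambda>_. c)"
proof (induction c)
  case 0
  then show ?case unfolding rf_def by (metis eval_zero)
next
  case (Suc c)
  then obtain g where g: "\<forall>xs. length xs = k \<longrightarrow> eval g xs c" unfolding rf_def by blast
  have "eval (Comp Succ [g]) xs (Suc c)" if "length xs = k" for xs
  proof (rule eval_comp[where ys="[c]"])
    show "list_all2 (\<lambda>g y. eval g xs y) [g] [c]" using g that by simp
    show "eval Succ [c] (Suc c)" using eval_succ[of "[c]"] by (simp add: arg_def)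
  qed
  then show ?case unfolding rf_def by blast
qed

lemma rf_proj: "i < k \<Longrightarrow> rf k (\<lambda>xs. xs ! i)"
  unfolding rf_def using eval_proj by (metis arg_def)

lemma rf_comp:
  assumes F: "rf m F" and G: "\<And>j. j < m \<Longrightarrow> rf k (G j)"
  shows "rf k (\<lambda>xs. F (map (\<lambda>j. G j xs) [0..<m]))"
proof -
  obtain f where f: "\<forall>xs. length xs = m \<longrightarrow> eval f xs (F xs)" using F unfolding rf_def by blast
  have "\<forall>j. \<exists>g. j < m \<longrightarrow> (\<forall>xs. length xs = k \<longrightarrow> eval g xs (G j xs))"
    using G unfolding rf_def by blast
  then obtain gg where gg: "\<And>j xs. j < m \<Longrightarrow> length xs = k \<Longrightarrow> eval (gg j) xs (G j xs)"
    by metis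
  have "eval (Comp f (map gg [0..<m])) xs (F (map (\<lambda>j. G j xs) [0..<m]))" if "length xs = k" for xs
  proof (rule eval_comp)
    show "list_all2 (\<lambda>g y. eval g xs y) (map gg [0..<m]) (map (\<lambda>j. G j xs) [0..<m])"
      using gg that by (simp add: list_all2_conv_all_nth)
    show "eval f (map (\<lambda>j. G j xs) [0..<m]) (F (map (\<lambda>j. G j xs) [0..<m]))"
      using f by simp
  qed
  then show ?thesis unfolding rf_def by blast
qed

fun prr :: "(nat list \<Rightarrow> nat) \<Rightarrow> (nat list \<Rightarrow> nat) \<Rightarrow> nat \<Rightarrow> nat list \<Rightarrow> nat" where
  "prr G H 0 ys = G ys"
| "prr G H (Suc n) ys = H (n # prr G H n ys # ys)"

lemma rf_primrec:
  assumes G: "rf k G" and H: "rf (Suc (Suc k)) H"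
  shows "rf (Suc k) (\<lambda>xs. prr G H (hd xs) (tl xs))"
proof -
  obtain g where g: "\<forall>xs. length xs = k \<longrightarrow> eval g xs (G xs)" using G unfolding rf_def by blast
  obtain h where h: "\<forall>xs. length xs = Suc (Suc k) \<longrightarrow> eval h xs (H xs)" using H unfolding rf_def by blast
  have *: "eval (PrimRec g h) (n # ys) (prr G H n ys)" if "length ys = k" for n ys
  proof (induction n)
    case 0
    then show ?case using g that by (simp add: eval_pr0)
  next
    case (Suc n)
    then show ?case using h that by (simp add: eval_prS)
  qed
  show ?thesis unfolding rf_def
  proof (intro exI allI impI)
    fix xs :: "nat list" assume "length xs = Suc k"
    then obtain n ys where "xs = n # ys" "length ys = k" by (cases xs) auto
    then show "eval (PrimRec g h) xs (prr G H (hd xs) (tl xs))" using * by simp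
  qed
qed

lemma map_upt_Suc_shift: "map (\<lambda>j. (if j = 0 then A else (\<lambda>xs. xs ! (j - 1))) xs) [0..<Suc (length xs)] = A xs # xs"
  by (rule nth_equalityI) (auto simp: nth_Cons' simp del: upt_Suc)

lemma rf_subst: "rf (Suc k) F \<Longrightarrow> rf k A \<Longrightarrow> rf k (\<lambda>xs. F (A xs # xs))"
proof -
  assume F: "rf (Suc k) F" and A: "rf k A"
  have "rf k (\<lambda>xs. F (map (\<lambda>j. (if j = 0 then A else (\<lambda>xs. xs ! (j - 1))) xs) [0..<Suc k]))"
    by (rule rf_comp[OF F]) (auto intro: A rf_proj)
  then show ?thesis
  proof (rule rf_cong)
    fix xs :: "nat list" assume "length xs = k"
    then show "F (map (\<lambda>j. (if j = 0 then A else (\<lambda>xs. xs ! (j - 1))) xs) [0..<Suc k]) = F (A xs # xs)"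
      using map_upt_Suc_shift[of A xs] by simp
  qed
qed

lemma rf_comp1: "rf 1 F \<Longrightarrow> rf k A \<Longrightarrow> rf k (\<lambda>xs. F [A xs])"
  using rf_comp[of 1 F k "\<lambda>_. A"] by simp

lemma rf_comp2: "rf 2 F \<Longrightarrow> rf k A \<Longrightarrow> rf k B \<Longrightarrow> rf k (\<lambda>xs. F [A xs, B xs])"
  using rf_comp[of 2 F k "\<lambda>j. if j = 0 then A else B"] by (simp add: upt_rec)

lemma rf_comp3: "rf 3 F \<Longrightarrow> rf k A \<Longrightarrow> rf k B \<Longrightarrow> rf k C \<Longrightarrow> rf k (\<lambda>xs. F [A xs, B xs, C xs])"
  using rf_comp[of 3 F k "\<lambda>j. if j = 0 then A else if j = 1 then B else C"] by (simp add: upt_rec)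


lemma rf_succ1: "rf 1 (\<lambda>xs. Suc (xs ! 0))"
  unfolding rf_def by (rule exI[of _ Succ]) (metis arg_def eval_succ less_one)

lemma rf_lift1: "rf 1 (\<lambda>xs. f (xs ! 0)) \<Longrightarrow> rf k A \<Longrightarrow> rf k (\<lambda>xs. f (A xs))"
  using rf_comp1[of "\<lambda>xs. f (xs ! 0)" k A] by simp

lemma rf_lift2: "rf 2 (\<lambda>xs. f (xs ! 0) (xs ! 1)) \<Longrightarrow> rf k A \<Longrightarrow> rf k B \<Longrightarrow> rf k (\<lambda>xs. f (A xs) (B xs))"
  using rf_comp2[of "\<lambda>xs. f (xs ! 0) (xs ! 1)" k A B] by simp

lemma rf_lift3: "rf 3 (\<lambda>xs. f (xs ! 0) (xs ! 1) (xs ! 2)) \<Longrightarrow> rf k A \<Longrightarrow> rf k B \<Longrightarrow> rf k C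
   \<Longrightarrow> rf k (\<lambda>xs. f (A xs) (B xs) (C xs))"
  using rf_comp3[of "\<lambda>xs. f (xs ! 0) (xs ! 1) (xs ! 2)" k A B C] by simp

lemma rf_Suc: "rf k A \<Longrightarrow> rf k (\<lambda>xs. Suc (A xs))"
  by (rule rf_lift1[OF rf_succ1])

lemma rf_primrec':
  "rf k G \<Longrightarrow> rf k2 H \<Longrightarrow> k2 = Suc (Suc k) \<Longrightarrow> k1 = Suc k \<Longrightarrow> rf k1 (\<lambda>xs. prr G H (hd xs) (tl xs))"
  using rf_primrec by blast

lemma rf_pr2:
  assumes "rf 1 (\<lambda>ys. g (ys ! 0))" "rf 3 (\<lambda>ys. h (ys ! 0) (ys ! 1) (ys ! 2))"
  shows "rf 2 (\<lambda>xs. rec_nat (g (xs ! 1)) (\<lambda>n r. h n r (xs ! 1)) (xs ! 0))"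
proof -
  have "rf 2 (\<lambda>xs. prr (\<lambda>ys. g (ys ! 0)) (\<lambda>ys. h (ys ! 0) (ys ! 1) (ys ! 2)) (hd xs) (tl xs))"
    by (rule rf_primrec'[OF assms]) simp_all
  then show ?thesis
  proof (rule rf_cong)
    fix xs :: "nat list" assume "length xs = 2"
    then obtain a b where xs: "xs = [a, b]" by (cases xs; cases "tl xs") auto
    have "prr (\<lambda>ys. g (ys ! 0)) (\<lambda>ys. h (ys ! 0) (ys ! 1) (ys ! 2)) n [b] = rec_nat (g b) (\<lambda>n r. h n r b) n" for n
      by (induction n) auto
    then show "prr (\<lambda>ys. g (ys ! 0)) (\<lambda>ys. h (ys ! 0) (ys ! 1) (ys ! 2)) (hd xs) (tl xs) =
         rec_nat (g (xs ! 1)) (\<lambda>n r. h n r (xs ! 1)) (xs ! 0)" using xs by simp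
  qed
qed

lemma rf_add2: "rf 2 (\<lambda>xs. xs ! 0 + xs ! 1)"
proof -
  have "rf 2 (\<lambda>xs. rec_nat (xs ! 1) (\<lambda>n r. Suc r) (xs ! 0))"
    by (rule rf_pr2) (intro rf_proj rf_Suc; simp)+
  moreover have "rec_nat y (\<lambda>n r. Suc r) x = x + y" for x y :: nat by (induction x) auto
  ultimately show ?thesis by simp
qed

lemma rf_add: "rf k A \<Longrightarrow> rf k B \<Longrightarrow> rf k (\<lambda>xs. A xs + B xs)"
  by (rule rf_lift2[OF rf_add2])

lemma rf_mult2: "rf 2 (\<lambda>xs. xs ! 0 * xs ! 1)"
proof -
  have "rf 2 (\<lambda>xs. rec_nat 0 (\<lambda>n r. r + xs ! 1) (xs ! 0))"
    by (rule rf_pr2[where g="\<lambda>_. 0"]) (intro rf_proj rf_add rf_const; simp)+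
  moreover have "rec_nat 0 (\<lambda>n r. r + y) x = x * y" for x y :: nat by (induction x) auto
  ultimately show ?thesis by simp
qed

lemma rf_mult: "rf k A \<Longrightarrow> rf k B \<Longrightarrow> rf k (\<lambda>xs. A xs * B xs)"
  by (rule rf_lift2[OF rf_mult2])

lemma rf_pred1: "rf 1 (\<lambda>xs. xs ! 0 - 1)"
proof -
  have "rf 1 (\<lambda>xs. prr (\<lambda>_. 0) (\<lambda>ys. ys ! 0) (hd xs) (tl xs))"
    by (rule rf_primrec'[of 0 _ 2]) (auto intro: rf_proj rf_const)
  then show ?thesis
  proof (rule rf_cong)
    fix xs :: "nat list" assume "length xs = 1"
    then obtain a where xs: "xs = [a]" by (cases xs) auto
    show "prr (\<lambda>_. 0) (\<lambda>ys. ys ! 0) (hd xs) (tl xs) = xs ! 0 - 1" using xs by (cases a) auto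
  qed
qed

lemma rf_sub2: "rf 2 (\<lambda>xs. xs ! 0 - xs ! 1)"
proof -
  have "rf 2 (\<lambda>xs. rec_nat (xs ! 1) (\<lambda>n r. r - 1) (xs ! 0))"
    by (rule rf_pr2) (intro rf_proj rf_lift1[OF rf_pred1]; simp)+
  then have "rf 2 (\<lambda>xs. rec_nat (xs ! 0) (\<lambda>n r. r - 1) (xs ! 1))"
    using rf_lift2[of "\<lambda>a b. rec_nat b (\<lambda>n r. r - 1) a" 2 "\<lambda>xs. xs ! 1" "\<lambda>xs. xs ! 0", OF _ rf_proj rf_proj]
    by simp
  moreover have "rec_nat y (\<lambda>n r. r - 1) x = y - x" for x y :: nat by (induction x) auto
  ultimately show ?thesis by simp
qed

lemma rf_sub: "rf k A \<Longrightarrow> rf k B \<Longrightarrow> rf k (\<lambda>xs. A xs - B xs)"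
  by (rule rf_lift2[OF rf_sub2])

lemma rf_if03: "rf 3 (\<lambda>xs. if xs ! 0 = 0 then xs ! 1 else xs ! 2)"
proof -
  have "rf 3 (\<lambda>xs. prr (\<lambda>ys. ys ! 0) (\<lambda>ys. ys ! 3) (hd xs) (tl xs))"
    by (rule rf_primrec'[of 2 _ 4]) (auto intro: rf_proj)
  then show ?thesis
  proof (rule rf_cong)
    fix xs :: "nat list" assume "length xs = 3"
    then obtain a b c where xs: "xs = [a, b, c]"
      by (cases xs; cases "tl xs"; cases "tl (tl xs)") auto
    show "prr (\<lambda>ys. ys ! 0) (\<lambda>ys. ys ! 3) (hd xs) (tl xs) = (if xs ! 0 = 0 then xs ! 1 else xs ! 2)"
      using xs by (cases a) auto
  qed
qed

lemma rf_if0: "rf k C \<Longrightarrow> rf k A \<Longrightarrow> rf k B \<Longrightarrow> rf k (\<lambda>xs. if C xs = 0 then A xs else B xs)"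
  by (rule rf_lift3[OF rf_if03])

definition rp :: "nat \<Rightarrow> (nat list \<Rightarrow> bool) \<Rightarrow> bool" where
  "rp k P \<longleftrightarrow> rf k (\<lambda>xs. if P xs then 1 else 0)"

lemma rf_if: "rp k P \<Longrightarrow> rf k A \<Longrightarrow> rf k B \<Longrightarrow> rf k (\<lambda>xs. if P xs then A xs else B xs)"
proof -
  assume "rp k P" "rf k A" "rf k B"
  then have "rf k (\<lambda>xs. if (if P xs then 1 else 0) = (0::nat) then B xs else A xs)"
    unfolding rp_def by (intro rf_if0)
  then show ?thesis by (rule rf_cong) simp
qed

lemma rp_intro: "rf k (\<lambda>xs. if P xs then 1 else 0) \<Longrightarrow> rp k P"
  unfolding rp_def .

lemma rp_eq0: "rf k A \<Longrightarrow> rp k (\<lambda>xs. A xs = 0)"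
  unfolding rp_def by (rule rf_if0) (auto intro: rf_const)

lemma rp_cong: "rp k P \<Longrightarrow> (\<And>xs. length xs = k \<Longrightarrow> P xs = Q xs) \<Longrightarrow> rp k Q"
  unfolding rp_def by (erule rf_cong) simp

lemma rp_eq: "rf k A \<Longrightarrow> rf k B \<Longrightarrow> rp k (\<lambda>xs. A xs = B xs)"
proof -
  assume "rf k A" "rf k B"
  then have "rp k (\<lambda>xs. (A xs - B xs) + (B xs - A xs) = 0)" by (intro rp_eq0 rf_add rf_sub)
  then show ?thesis by (rule rp_cong) auto
qed

lemma rp_le: "rf k A \<Longrightarrow> rf k B \<Longrightarrow> rp k (\<lambda>xs. A xs \<le> B xs)"
proof -
  assume "rf k A" "rf k B"
  then have "rp k (\<lambda>xs. A xs - B xs = 0)" by (intro rp_eq0 rf_add rf_sub)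
  then show ?thesis by (rule rp_cong) auto
qed

lemma rp_less: "rf k A \<Longrightarrow> rf k B \<Longrightarrow> rp k (\<lambda>xs. A xs < B xs)"
proof -
  assume "rf k A" "rf k B"
  then have "rp k (\<lambda>xs. Suc (A xs) - B xs = 0)" by (intro rp_eq0 rf_Suc rf_sub)
  then show ?thesis by (rule rp_cong) auto
qed

lemma rp_not: "rp k P \<Longrightarrow> rp k (\<lambda>xs. \<not> P xs)"
  unfolding rp_def by (rule rf_cong[OF rf_if[of k P "\<lambda>_. 0" "\<lambda>_. 1"]]) (auto intro: rf_const simp: rp_def)

lemma rp_conj: "rp k P \<Longrightarrow> rp k Q \<Longrightarrow> rp k (\<lambda>xs. P xs \<and> Q xs)"
proof -
  assume "rp k P" "rp k Q"
  then have "rf k (\<lambda>xs. (if P xs then 1 else 0) * (if Q xs then 1 else (0::nat)))"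
    unfolding rp_def by (rule rf_mult)
  then show ?thesis unfolding rp_def by (rule rf_cong) simp
qed

lemma rp_disj: "rp k P \<Longrightarrow> rp k Q \<Longrightarrow> rp k (\<lambda>xs. P xs \<or> Q xs)"
  by (rule rp_cong[OF rp_not[OF rp_conj[OF rp_not rp_not]]]) auto

lemma rp_imp: "rp k P \<Longrightarrow> rp k Q \<Longrightarrow> rp k (\<lambda>xs. P xs \<longrightarrow> Q xs)"
  by (rule rp_cong[OF rp_disj[OF rp_not]]) auto

lemma rp_const: "rp k (\<lambda>_. b)"
  unfolding rp_def by (rule rf_const)

lemma rf_hd: "0 < k \<Longrightarrow> rf k (\<lambda>zs. hd zs)"
  by (rule rf_cong[OF rf_proj[of 0]]) (auto simp: hd_conv_nth)

lemma rf_tl_nth: "Suc i < k \<Longrightarrow> rf k (\<lambda>zs. tl zs ! i)"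
  by (rule rf_cong[OF rf_proj[of "Suc i"]]) (auto simp: nth_tl)

lemma rf_hd2: "Suc 0 < k \<Longrightarrow> rf k (\<lambda>zs. hd (tl zs))"
proof -
  have "hd (tl xs) = xs ! 1" if "Suc 0 < length xs" for xs :: "nat list"
    using that by (cases xs; cases "tl xs") auto
  then show "Suc 0 < k \<Longrightarrow> ?thesis" by (intro rf_cong[OF rf_proj[of 1]]) auto
qed

lemma rf_hd3: "Suc (Suc 0) < k \<Longrightarrow> rf k (\<lambda>zs. hd (tl (tl zs)))"
proof -
  have "hd (tl (tl xs)) = xs ! 2" if "Suc (Suc 0) < length xs" for xs :: "nat list"
    using that by (cases xs; cases "tl xs"; cases "tl (tl xs)") auto
  then show "Suc (Suc 0) < k \<Longrightarrow> ?thesis" by (intro rf_cong[OF rf_proj[of 2]]) auto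
qed

lemma rf_tl2_nth: "Suc (Suc i) < k \<Longrightarrow> rf k (\<lambda>zs. tl (tl zs) ! i)"
  by (rule rf_cong[OF rf_proj[of "Suc (Suc i)"]]) (auto simp: nth_tl)

lemma rf_tl3_nth: "Suc (Suc (Suc i)) < k \<Longrightarrow> rf k (\<lambda>zs. tl (tl (tl zs)) ! i)"
  by (rule rf_cong[OF rf_proj[of "Suc (Suc (Suc i))"]]) (auto simp: nth_tl)

lemma rf_sum:
  assumes F0: "rf k1 (\<lambda>zs. F (hd zs) (tl zs))" and A: "rf k A" and k1: "k1 = Suc k"
  shows "rf k (\<lambda>xs. \<Sum>n<A xs. F n xs)"
proof -
  have F: "rf (Suc k) (\<lambda>zs. F (hd zs) (tl zs))" using F0 k1 by simp
  have F2: "rf (Suc (Suc k)) (\<lambda>ys. F (ys ! 0) (drop 2 ys))"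
  proof -
    have "rf (Suc (Suc k)) (\<lambda>ys. (\<lambda>zs. F (hd zs) (tl zs)) (map (\<lambda>j. (if j = 0 then (\<lambda>ys. ys ! 0) else (\<lambda>ys. ys ! Suc j)) ys) [0..<Suc k]))"
      by (rule rf_comp[OF F]) (auto intro: rf_proj)
    then show ?thesis
    proof (rule rf_cong)
      fix ys :: "nat list" assume l: "length ys = Suc (Suc k)"
      have "map (\<lambda>j. (if j = 0 then (\<lambda>ys. ys ! 0) else (\<lambda>ys. ys ! Suc j)) ys) [0..<Suc k] = ys ! 0 # drop 2 ys"
        by (rule nth_equalityI) (use l in \<open>auto simp: nth_Cons' simp del: upt_Suc\<close>)
      then show "(\<lambda>zs. F (hd zs) (tl zs)) (map (\<lambda>j. (if j = 0 then (\<lambda>ys. ys ! 0) else (\<lambda>ys. ys ! Suc j)) ys) [0..<Suc k]) = F (ys ! 0) (drop 2 ys)"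
        by simp
    qed
  qed
  have "rf (Suc k) (\<lambda>zs. prr (\<lambda>_. 0) (\<lambda>ys. ys ! 1 + F (ys ! 0) (drop 2 ys)) (hd zs) (tl zs))"
    by (rule rf_primrec) (auto intro: rf_const rf_add rf_proj F2)
  then have "rf k (\<lambda>xs. (\<lambda>zs. prr (\<lambda>_. 0) (\<lambda>ys. ys ! 1 + F (ys ! 0) (drop 2 ys)) (hd zs) (tl zs)) (A xs # xs))"
    by (rule rf_subst[OF _ A])
  moreover have "prr (\<lambda>_. 0) (\<lambda>ys. ys ! 1 + F (ys ! 0) (drop 2 ys)) n xs = (\<Sum>m<n. F m xs)" for n xs
    by (induction n) auto
  ultimately show ?thesis by simp
qed

lemma rp_all:
  assumes P0: "rp k1 (\<lambda>zs. P (hd zs) (tl zs))" and A: "rf k A" and k1: "k1 = Suc k"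
  shows "rp k (\<lambda>xs. \<forall>n<A xs. P n xs)"
proof -
  have P: "rp (Suc k) (\<lambda>zs. P (hd zs) (tl zs))" using P0 k1 by simp
  have "rf k (\<lambda>xs. \<Sum>n<A xs. if P n xs then 0 else 1)"
    by (rule rf_sum[OF _ A refl]) (rule rf_if[OF P]; rule rf_const)
  then have "rp k (\<lambda>xs. (\<Sum>n<A xs. if P n xs then 0 else 1) = (0::nat))" by (rule rp_eq0)
  then show ?thesis by (rule rp_cong) auto
qed

lemma rp_ex:
  assumes P0: "rp k1 (\<lambda>zs. P (hd zs) (tl zs))" and A: "rf k A" and k1: "k1 = Suc k"
  shows "rp k (\<lambda>xs. \<exists>n<A xs. P n xs)"
proof -
  have P: "rp (Suc k) (\<lambda>zs. P (hd zs) (tl zs))" using P0 k1 by simp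
  have "rp (Suc k) (\<lambda>zs. \<not> P (hd zs) (tl zs))" by (rule rp_not[OF P])
  then have "rp k (\<lambda>xs. \<forall>n<A xs. \<not> P n xs)" by (rule rp_all[OF _ A refl])
  then show ?thesis by (rule rp_cong[OF rp_not]) auto
qed

lemmas rf_intros = rf_const rf_proj rf_hd rf_tl_nth rf_hd2 rf_hd3 rf_tl2_nth rf_tl3_nth rf_Suc rf_add rf_mult rf_sub rf_if rf_sum
  rp_eq rp_le rp_less rp_not rp_conj rp_disj rp_imp rp_const rp_all rp_ex

lemma "rf 2 (\<lambda>xs. \<Sum>n < xs ! 0. if n < xs ! 1 \<and> (\<exists>m<n. m * m = xs!1) then n * xs ! 1 else 3)"
  by (intro rf_intros) simp_all


lemma triangle_sum: "(\<Sum>i<Suc n. i) = triangle n"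
  by (induction n) auto

lemma rf_penc: "rf k A \<Longrightarrow> rf k B \<Longrightarrow> rf k (\<lambda>xs. prod_encode (A xs, B xs))"
proof -
  have "rf 2 (\<lambda>xs. (\<Sum>i<Suc (xs ! 0 + xs ! 1). i) + xs ! 0)"
    by (intro rf_intros) simp_all
  then have "rf 2 (\<lambda>xs. prod_encode (xs ! 0, xs ! 1))"
    by (rule rf_cong) (simp del: sum.lessThan_Suc add: prod_encode_def triangle_sum)
  then show "rf k A \<Longrightarrow> rf k B \<Longrightarrow> rf k (\<lambda>xs. prod_encode (A xs, B xs))"
    by (rule rf_lift2)
qed

lemma fst_decode_sum: "(\<Sum>m<Suc x. if (\<exists>n<Suc x. prod_encode (m, n) = x) then m else 0) = fst (prod_decode x)"
proof -
  obtain a b where ab: "prod_decode x = (a, b)" by (cases "prod_decode x")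
  then have x: "x = prod_encode (a, b)" by (metis prod_decode_inverse)
  have "(\<exists>n<Suc x. prod_encode (m, n) = x) \<longleftrightarrow> m = a" if "m < Suc x" for m
  proof -
    have "b \<le> x" using x le_prod_encode_2 by metis
    then show ?thesis using x by auto
  qed
  then have "(\<Sum>m<Suc x. if (\<exists>n<Suc x. prod_encode (m, n) = x) then m else 0) = (\<Sum>m<Suc x. if m = a then m else 0)"
    by (intro sum.cong) auto
  also have "\<dots> = a" using x le_prod_encode_1 by (simp del: sum.lessThan_Suc add: sum.delta) (metis le_imp_less_Suc)
  finally show ?thesis using ab by simp
qed

lemma snd_decode_sum: "(\<Sum>m<Suc x. if (\<exists>n<Suc x. prod_encode (n, m) = x) then m else 0) = snd (prod_decode x)"
proof -
  obtain a b where ab: "prod_decode x = (a, b)" by (cases "prod_decode x")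
  then have x: "x = prod_encode (a, b)" by (metis prod_decode_inverse)
  have "(\<exists>n<Suc x. prod_encode (n, m) = x) \<longleftrightarrow> m = b" if "m < Suc x" for m
  proof -
    have "a \<le> x" using x le_prod_encode_1 by metis
    then show ?thesis using x by auto
  qed
  then have "(\<Sum>m<Suc x. if (\<exists>n<Suc x. prod_encode (n, m) = x) then m else 0) = (\<Sum>m<Suc x. if m = b then m else 0)"
    by (intro sum.cong) auto
  also have "\<dots> = b" using x le_prod_encode_2 by (simp del: sum.lessThan_Suc add: sum.delta) (metis le_imp_less_Suc)
  finally show ?thesis using ab by simp
qed

lemma rf_fstd: "rf k A \<Longrightarrow> rf k (\<lambda>xs. fst (prod_decode (A xs)))"
proof -
  have "rf 1 (\<lambda>xs. \<Sum>m<Suc (xs ! 0). if (\<exists>n<Suc (xs ! 0). prod_encode (m, n) = xs ! 0) then m else 0)"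
    by (intro rf_intros rf_penc) simp_all
  then have "rf 1 (\<lambda>xs. fst (prod_decode (xs ! 0)))" by (rule rf_cong) (simp only: fst_decode_sum)
  then show "rf k A \<Longrightarrow> ?thesis" by (rule rf_lift1)
qed

lemma rf_sndd: "rf k A \<Longrightarrow> rf k (\<lambda>xs. snd (prod_decode (A xs)))"
proof -
  have "rf 1 (\<lambda>xs. \<Sum>m<Suc (xs ! 0). if (\<exists>n<Suc (xs ! 0). prod_encode (n, m) = xs ! 0) then m else 0)"
    by (intro rf_intros rf_penc) simp_all
  then have "rf 1 (\<lambda>xs. snd (prod_decode (xs ! 0)))" by (rule rf_cong) (simp only: snd_decode_sum)
  then show "rf k A \<Longrightarrow> ?thesis" by (rule rf_lift1)
qed

definition hdc :: "nat \<Rightarrow> nat" where "hdc c = fst (prod_decode (c - 1))"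
definition tlc :: "nat \<Rightarrow> nat" where "tlc c = snd (prod_decode (c - 1))"
definition consc :: "nat \<Rightarrow> nat \<Rightarrow> nat" where "consc x c = Suc (prod_encode (x, c))"
definition dropc :: "nat \<Rightarrow> nat \<Rightarrow> nat" where "dropc i c = rec_nat c (\<lambda>n r. tlc r) i"
definition nthc :: "nat \<Rightarrow> nat \<Rightarrow> nat" where "nthc c i = hdc (dropc i c)"
definition lenc :: "nat \<Rightarrow> nat" where "lenc c = (\<Sum>i<c. if dropc i c = 0 then 0 else 1)"

lemma rf_hdc: "rf k A \<Longrightarrow> rf k (\<lambda>xs. hdc (A xs))"
  unfolding hdc_def by (intro rf_fstd rf_sub rf_const)

lemma rf_tlc: "rf k A \<Longrightarrow> rf k (\<lambda>xs. tlc (A xs))"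
  unfolding tlc_def by (intro rf_sndd rf_sub rf_const)

lemma rf_consc: "rf k A \<Longrightarrow> rf k B \<Longrightarrow> rf k (\<lambda>xs. consc (A xs) (B xs))"
  unfolding consc_def by (intro rf_Suc rf_penc)

lemma rf_dropc: "rf k A \<Longrightarrow> rf k B \<Longrightarrow> rf k (\<lambda>xs. dropc (A xs) (B xs))"
proof -
  have "rf 2 (\<lambda>xs. rec_nat (xs ! 1) (\<lambda>n r. tlc r) (xs ! 0))"
    by (rule rf_pr2[where g="\<lambda>y. y"]; intro rf_proj rf_tlc; simp)+
  then show "rf k A \<Longrightarrow> rf k B \<Longrightarrow> rf k (\<lambda>xs. dropc (A xs) (B xs))"
    unfolding dropc_def by (rule rf_lift2)
qed

lemma rf_nthc: "rf k A \<Longrightarrow> rf k B \<Longrightarrow> rf k (\<lambda>xs. nthc (A xs) (B xs))"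
  unfolding nthc_def by (intro rf_hdc rf_dropc)

lemma rf_lenc: "rf k A \<Longrightarrow> rf k (\<lambda>xs. lenc (A xs))"
proof -
  have "rf 1 (\<lambda>xs. \<Sum>i<xs ! 0. if dropc i (xs ! 0) = 0 then 0 else 1)"
    by (intro rf_intros rf_dropc) simp_all
  then show "rf k A \<Longrightarrow> ?thesis" unfolding lenc_def by (rule rf_lift1)
qed

lemma list_decode_eq: "list_decode c = (if c = 0 then [] else fst (prod_decode (c - 1)) # list_decode (snd (prod_decode (c - 1))))"
  by (cases c) (auto split: prod.split)

lemma prod_decode_0: "prod_decode 0 = (0, 0)"
  using prod_encode_inverse[of "(0,0)"] by (simp add: prod_encode_def)

lemma hdc_code: "hdc (list_encode l) = arg l 0"
  by (cases l) (auto simp: hdc_def arg_def prod_decode_0)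

lemma tlc_code: "tlc (list_encode l) = list_encode (tl l)"
  by (cases l) (auto simp: tlc_def prod_decode_0)

lemma consc_code: "consc x (list_encode l) = list_encode (x # l)"
  by (simp add: consc_def)

lemma dropc_code: "dropc i (list_encode l) = list_encode (drop i l)"
  by (induction i) (auto simp: dropc_def tlc_code drop_Suc tl_drop)

lemma nthc_code: "nthc (list_encode l) i = arg l i"
  by (simp add: nthc_def dropc_code hdc_code arg_def hd_drop_conv_nth)

lemma length_le_code: "length l \<le> list_encode l"
proof (induction l)
  case (Cons a l)
  then show ?case by simp (meson le_prod_encode_2 order_trans)
qed simp

lemma list_encode_0: "list_encode l = 0 \<longleftrightarrow> l = []"
  by (cases l) auto

lemma lenc_code: "lenc (list_encode l) = length l"
proof -
  have "lenc (list_encode l) = (\<Sum>i<list_encode l. if i < length l then 1 else 0)"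
    unfolding lenc_def dropc_code
    by (intro sum.cong) (auto simp: list_encode_0)
  also have "\<dots> = card {i. i < list_encode l \<and> i < length l}"
    by (simp add: sum.If_cases Int_def)
  also have "{i. i < list_encode l \<and> i < length l} = {..<length l}" using length_le_code[of l] by auto
  finally show ?thesis by simp
qed


fun iter_opt :: "(nat list \<Rightarrow> nat option) \<Rightarrow> (nat list \<Rightarrow> nat option) \<Rightarrow> nat \<Rightarrow> nat list \<Rightarrow> nat option" where
  "iter_opt G H 0 xs = G xs"
| "iter_opt G H (Suc n) xs = (case iter_opt G H n xs of None \<Rightarrow> None | Some y \<Rightarrow> H (n # y # xs))"

fun bev :: "recf \<Rightarrow> nat \<Rightarrow> nat list \<Rightarrow> nat option" where
  "bev Zero s xs = Some 0"
| "bev Succ s xs = Some (Suc (arg xs 0))"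
| "bev (Proj i) s xs = Some (arg xs i)"
| "bev (Comp f gs) s xs = (if (\<forall>g\<in>set gs. bev g s xs \<noteq> None) then bev f s (map (\<lambda>g. the (bev g s xs)) gs) else None)"
| "bev (PrimRec g h) s xs = (case xs of [] \<Rightarrow> None | n # ys \<Rightarrow> iter_opt (bev g s) (bev h s) n ys)"
| "bev (Mn f) s xs = (if \<exists>m\<le>s. bev f s (m # xs) = Some 0 \<and> (\<forall>m'<m. \<exists>y. bev f s (m' # xs) = Some (Suc y))
     then Some (THE m. m \<le> s \<and> bev f s (m # xs) = Some 0 \<and> (\<forall>m'<m. \<exists>y. bev f s (m' # xs) = Some (Suc y))) else None)"

lemma good_unique:
  fixes m n :: nat
  assumes "F m = Some (0::nat) \<and> (\<forall>m'<m. \<exists>y. F m' = Some (Suc y))"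
    and "F n = Some 0 \<and> (\<forall>m'<n. \<exists>y. F m' = Some (Suc y))"
  shows "m = n"
proof (rule ccontr)
  assume "m \<noteq> n"
  then consider "m < n" | "n < m" by (cases "m < n") auto
  then show False
  proof cases
    case 1
    then obtain y where "F m = Some (Suc y)" using assms(2) by blast
    then show False using assms(1) by simp
  next
    case 2
    then obtain y where "F n = Some (Suc y)" using assms(1) by blast
    then show False using assms(2) by simp
  qed
qed

lemma iter_opt_mono:
  assumes "\<And>xs z. G xs = Some z \<Longrightarrow> G' xs = Some z" "\<And>xs z. H xs = Some z \<Longrightarrow> H' xs = Some z"
  shows "iter_opt G H n xs = Some z \<Longrightarrow> iter_opt G' H' n xs = Some z"
proof (induction n arbitrary: z)
  case 0
  then show ?case using assms by simp
next
  case (Suc n)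
  then obtain y where "iter_opt G H n xs = Some y" by (auto split: option.splits)
  then show ?case using Suc assms by auto
qed

lemma bev_mono: "bev g s xs = Some z \<Longrightarrow> s \<le> s' \<Longrightarrow> bev g s' xs = Some z"
proof (induction g arbitrary: xs z)
  case (Comp f gs)
  have all: "\<forall>g\<in>set gs. bev g s xs \<noteq> None" using Comp.prems by (auto split: if_splits)
  have eq: "bev g s' xs = bev g s xs" if gin: "g \<in> set gs" for g
  proof -
    obtain y where "bev g s xs = Some y" using all gin by auto
    then show ?thesis using Comp.IH(2)[OF gin] Comp.prems(2) by auto
  qed
  then have meq: "map (\<lambda>g. the (bev g s' xs)) gs = map (\<lambda>g. the (bev g s xs)) gs" by auto
  have all': "\<forall>g\<in>set gs. bev g s' xs \<noteq> None" using all eq by auto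
  have fz: "bev f s (map (\<lambda>g. the (bev g s xs)) gs) = Some z" using Comp.prems all by simp
  have "bev (Comp f gs) s' xs = bev f s' (map (\<lambda>g. the (bev g s' xs)) gs)" using all' by simp
  also have "\<dots> = bev f s' (map (\<lambda>g. the (bev g s xs)) gs)" by (simp only: meq)
  also have "\<dots> = Some z" using Comp.IH(1)[OF fz Comp.prems(2)] .
  finally show ?case .
next
  case (PrimRec g h)
  then obtain n ys where xs: "xs = n # ys" by (cases xs) auto
  then show ?case using PrimRec iter_opt_mono[of "bev g s" "bev g s'" "bev h s" "bev h s'" n ys z] by auto
next
  case (Mn f)
  define good where "good t m \<longleftrightarrow> bev f t (m # xs) = Some 0 \<and> (\<forall>m'<m. \<exists>y. bev f t (m' # xs) = Some (Suc y))" for t m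
  have bevMn: "bev (Mn f) t xs = (if \<exists>m\<le>t. good t m then Some (THE m. m \<le> t \<and> good t m) else None)" for t
    unfolding good_def bev.simps by (rule refl)
  have uniq: "m = n" if "good t m" "good t n" for t m n
    by (rule good_unique[of "\<lambda>m. bev f t (m # xs)"]) (use that in \<open>simp_all add: good_def\<close>)
  have ex: "\<exists>m\<le>s. good s m" using Mn.prems(1) unfolding bevMn by (metis option.distinct(1))
  then obtain m where m: "m \<le> s" "good s m" by blast
  have "bev (Mn f) s xs = Some (THE m. m \<le> s \<and> good s m)" unfolding bevMn using ex by simp
  then have z: "z = (THE m. m \<le> s \<and> good s m)" using Mn.prems(1) by simp
  have zm: "z = m" unfolding z by (rule the_equality) (use m uniq in blast)+
  have g1: "bev f s' (m # xs) = Some 0" using m(2) Mn.IH Mn.prems(2) unfolding good_def by blast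
  have g2: "\<exists>y. bev f s' (m' # xs) = Some (Suc y)" if mm: "m' < m" for m'
  proof -
    obtain y where "bev f s (m' # xs) = Some (Suc y)" using m(2) mm unfolding good_def by blast
    then show ?thesis using Mn.IH Mn.prems(2) by blast
  qed
  have g': "good s' m" unfolding good_def using g1 g2 by blast
  have ms': "m \<le> s'" using m Mn.prems(2) by simp
  have "(THE m. m \<le> s' \<and> good s' m) = m" by (rule the_equality) (use g' ms' uniq in blast)+
  then show ?case unfolding bevMn zm using g' ms' by auto
qed auto

lemma bev_sound: "bev g s xs = Some z \<Longrightarrow> eval g xs z"
proof (induction g arbitrary: xs z)
  case Zero
  then show ?case using eval_zero by simp
next
  case Succ
  then show ?case using eval_succ by auto
next
  case (Proj i)
  then show ?case using eval_proj by auto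
next
  case (Comp f gs)
  have all: "\<forall>g\<in>set gs. bev g s xs \<noteq> None" using Comp.prems by (auto split: if_splits)
  have fz: "bev f s (map (\<lambda>g. the (bev g s xs)) gs) = Some z" using Comp.prems all by simp
  have "list_all2 (\<lambda>g y. eval g xs y) gs (map (\<lambda>g. the (bev g s xs)) gs)"
    unfolding list.rel_map list_all2_same
  proof
    fix g assume gin: "g \<in> set gs"
    then obtain y where "bev g s xs = Some y" using all by auto
    then show "eval g xs (the (bev g s xs))" using Comp.IH(2)[OF gin] by simp
  qed
  then show ?case using Comp.IH(1)[OF fz] by (rule eval_comp)
next
  case (PrimRec g h)
  then obtain n ys where xs: "xs = n # ys" by (cases xs) auto
  have "iter_opt (bev g s) (bev h s) n ys = Some z \<Longrightarrow> eval (PrimRec g h) (n # ys) z" for z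
  proof (induction n arbitrary: z)
    case 0
    then show ?case using PrimRec.IH(1) eval_pr0 by simp
  next
    case (Suc n)
    then obtain y where y: "iter_opt (bev g s) (bev h s) n ys = Some y" by (auto split: option.splits)
    then have "bev h s (n # y # ys) = Some z" using Suc.prems by simp
    then show ?case using Suc.IH[OF y] PrimRec.IH(2) eval_prS by blast
  qed
  then show ?case using PrimRec.prems xs by simp
next
  case (Mn f)
  define good where "good t m \<longleftrightarrow> bev f t (m # xs) = Some 0 \<and> (\<forall>m'<m. \<exists>y. bev f t (m' # xs) = Some (Suc y))" for t m
  have bevMn: "bev (Mn f) t xs = (if \<exists>m\<le>t. good t m then Some (THE m. m \<le> t \<and> good t m) else None)" for t
    unfolding good_def bev.simps by (rule refl)
  have uniq: "m = n" if "good t m" "good t n" for t m n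
    by (rule good_unique[of "\<lambda>m. bev f t (m # xs)"]) (use that in \<open>simp_all add: good_def\<close>)
  have ex: "\<exists>m\<le>s. good s m" using Mn.prems(1) unfolding bevMn by (metis option.distinct(1))
  then obtain m where m: "m \<le> s" "good s m" by blast
  have "bev (Mn f) s xs = Some (THE m. m \<le> s \<and> good s m)" unfolding bevMn using ex by simp
  then have z: "z = (THE m. m \<le> s \<and> good s m)" using Mn.prems(1) by simp
  have zm: "z = m" unfolding z by (rule the_equality) (use m uniq in blast)+
  have "eval f (m # xs) 0" using m(2) Mn.IH unfolding good_def by blast
  moreover have "\<forall>m'<m. \<exists>y. eval f (m' # xs) (Suc y)" using m(2) Mn.IH unfolding good_def by blast
  ultimately show ?case using eval_mn zm by blast
qed

lemma list_all2_bev: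
  assumes "list_all2 (\<lambda>g y. eval g xs y \<and> (\<exists>s. bev g s xs = Some y)) gs ys"
  shows "\<exists>s. list_all2 (\<lambda>g y. bev g s xs = Some y) gs ys"
  using assms
proof (induction rule: list_all2_induct)
  case Nil
  then show ?case by simp
next
  case (Cons g gs y ys)
  then obtain s1 s2 where s1: "bev g s1 xs = Some y" and s2: "list_all2 (\<lambda>g y. bev g s2 xs = Some y) gs ys" by blast
  have "bev g (max s1 s2) xs = Some y" using bev_mono[OF s1] by simp
  moreover have "list_all2 (\<lambda>g y. bev g (max s1 s2) xs = Some y) gs ys"
    using s2 by (rule list_all2_mono) (erule bev_mono, simp)
  ultimately show ?case by blast
qed

lemma bev_complete: "eval g xs z \<Longrightarrow> \<exists>s. bev g s xs = Some z"
proof (induction rule: eval.induct)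
  case (eval_comp xs gs ys f z)
  obtain s1 where s1: "list_all2 (\<lambda>g y. bev g s1 xs = Some y) gs ys" using list_all2_bev[OF eval_comp(1)] by blast
  obtain s2 where s2: "bev f s2 ys = Some z" using \<open>\<exists>s. bev f s ys = Some z\<close> by blast
  define s where "s = max s1 s2"
  have l: "list_all2 (\<lambda>g y. bev g s xs = Some y) gs ys"
    using s1 by (rule list_all2_mono) (erule bev_mono, simp add: s_def)
  then have all: "\<forall>g\<in>set gs. bev g s xs \<noteq> None"
    by (induction rule: list_all2_induct) auto
  have "map (\<lambda>g. the (bev g s xs)) gs = ys"
    using l by (induction rule: list_all2_induct) auto
  moreover have "bev f s ys = Some z" using bev_mono[OF s2] by (simp add: s_def)
  ultimately have "bev (Comp f gs) s xs = Some z" using all by simp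
  then show ?case by blast
next
  case (eval_pr0 g xs z h)
  then obtain s where "bev g s xs = Some z" by blast
  then have "bev (PrimRec g h) s (0 # xs) = Some z" by simp
  then show ?case by blast
next
  case (eval_prS g h n xs y z)
  obtain s1 where s1: "bev (PrimRec g h) s1 (n # xs) = Some y" using \<open>\<exists>s. bev (PrimRec g h) s (n # xs) = Some y\<close> by blast
  obtain s2 where s2: "bev h s2 (n # y # xs) = Some z" using \<open>\<exists>s. bev h s (n # y # xs) = Some z\<close> by blast
  have a: "iter_opt (bev g (max s1 s2)) (bev h (max s1 s2)) n xs = Some y"
    using bev_mono[OF s1, of "max s1 s2"] by simp
  have b: "bev h (max s1 s2) (n # y # xs) = Some z" using bev_mono[OF s2] by simp
  have "bev (PrimRec g h) (max s1 s2) (Suc n # xs) = Some z" using a b by simp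
  then show ?case by blast
next
  case (eval_mn f n xs)
  obtain s0 where s0: "bev f s0 (n # xs) = Some 0" using \<open>\<exists>s. bev f s (n # xs) = Some 0\<close> by blast
  have "\<forall>m. \<exists>p. m < n \<longrightarrow> bev f (fst p) (m # xs) = Some (Suc (snd p))"
  proof
    fix m
    show "\<exists>p. m < n \<longrightarrow> bev f (fst p) (m # xs) = Some (Suc (snd p))"
    proof (cases "m < n")
      case True
      then obtain y s where "bev f s (m # xs) = Some (Suc y)" using \<open>\<forall>m<n. \<exists>y. eval f (m # xs) (Suc y) \<and> (\<exists>s. bev f s (m # xs) = Some (Suc y))\<close> by blast
      then show ?thesis by (intro exI[of _ "(s, y)"]) simp
    qed simp
  qed
  from choice[OF this] obtain sf where sf0: "\<forall>m. m < n \<longrightarrow> bev f (fst (sf m)) (m # xs) = Some (Suc (snd (sf m)))" by blast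
  then have sf: "\<And>m. m < n \<Longrightarrow> bev f (fst (sf m)) (m # xs) = Some (Suc (snd (sf m)))" by blast
  define S where "S = s0 + n + (\<Sum>m<n. fst (sf m))"
  have le: "fst (sf m) \<le> S" if "m < n" for m
  proof -
    have "fst (sf m) \<le> (\<Sum>m<n. fst (sf m))" using that by (intro member_le_sum) auto
    then show ?thesis by (simp add: S_def)
  qed
  define good where "good t m \<longleftrightarrow> bev f t (m # xs) = Some 0 \<and> (\<forall>m'<m. \<exists>y. bev f t (m' # xs) = Some (Suc y))" for t m
  have bevMn: "bev (Mn f) t xs = (if \<exists>m\<le>t. good t m then Some (THE m. m \<le> t \<and> good t m) else None)" for t
    unfolding good_def bev.simps by (rule refl)
  have uniq: "m = n" if "good t m" "good t n" for t m n
    by (rule good_unique[of "\<lambda>m. bev f t (m # xs)"]) (use that in \<open>simp_all add: good_def\<close>)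
  have g: "good S n" unfolding good_def
  proof
    show "bev f S (n # xs) = Some 0" using bev_mono[OF s0] by (simp add: S_def)
    show "\<forall>m'<n. \<exists>y. bev f S (m' # xs) = Some (Suc y)"
    proof (intro allI impI)
      fix m' assume "m' < n"
      then show "\<exists>y. bev f S (m' # xs) = Some (Suc y)" using bev_mono[OF sf[OF \<open>m' < n\<close>] le[OF \<open>m' < n\<close>]] by blast
    qed
  qed
  have nS: "n \<le> S" by (simp add: S_def)
  have "(THE m. m \<le> S \<and> good S m) = n" by (rule the_equality) (use g nS uniq in blast)+
  then have "bev (Mn f) S xs = Some n" unfolding bevMn using g nS by auto
  then show ?case by blast
qed auto

lemma eval_det: "eval g xs z \<Longrightarrow> eval g xs z' \<Longrightarrow> z = z'"
proof -
  assume "eval g xs z" "eval g xs z'"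
  then obtain s1 s2 where "bev g s1 xs = Some z" "bev g s2 xs = Some z'" using bev_complete by blast
  then have "bev g (max s1 s2) xs = Some z" "bev g (max s1 s2) xs = Some z'"
    by (auto intro: bev_mono)
  then show ?thesis by simp
qed


fun ocode :: "nat option \<Rightarrow> nat" where
  "ocode None = 0" | "ocode (Some z) = Suc z"

definition bcode :: "recf \<Rightarrow> nat \<Rightarrow> nat \<Rightarrow> nat" where
  "bcode g s c = ocode (bev g s (list_decode c))"

lemma rf_list_map:
  "(\<And>g. g \<in> set gs \<Longrightarrow> rf k (F g)) \<Longrightarrow> rf k (\<lambda>xs. list_encode (map (\<lambda>g. F g xs) gs))"
proof (induction gs)
  case Nil
  then show ?case by (simp add: rf_const)
next
  case (Cons g gs)
  then have "rf k (\<lambda>xs. consc (F g xs) (list_encode (map (\<lambda>g. F g xs) gs)))"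
    by (intro rf_consc) auto
  then show ?case by (simp add: consc_code)
qed

lemma rp_list_all:
  "(\<And>g. g \<in> set gs \<Longrightarrow> rf k (F g)) \<Longrightarrow> rp k (\<lambda>xs. \<forall>g\<in>set gs. F g xs \<noteq> 0)"
proof (induction gs)
  case Nil
  then show ?case by (simp add: rp_const)
next
  case (Cons g gs)
  then have "rp k (\<lambda>xs. \<not> F g xs = 0 \<and> (\<forall>g\<in>set gs. F g xs \<noteq> 0))"
    by (intro rp_conj rp_not rp_eq rf_const) auto
  then show ?case by simp
qed

lemma list_decode_consc: "list_decode (consc x c) = x # list_decode c"
  by (simp add: consc_def)

lemma iter_prr:
  "prr (\<lambda>ys. bcode g (ys ! 0) (ys ! 1))
       (\<lambda>ys. if ys ! 1 = 0 then 0 else bcode h (ys ! 2) (consc (ys ! 0) (consc (ys ! 1 - 1) (ys ! 3)))) n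
       [s, list_encode l] = ocode (iter_opt (bev g s) (bev h s) n l)"
proof (induction n)
  case 0
  then show ?case by (simp add: bcode_def)
next
  case (Suc n)
  show ?case
  proof (cases "iter_opt (bev g s) (bev h s) n l")
    case None
    then show ?thesis using Suc by simp
  next
    case (Some y)
    then show ?thesis using Suc by (simp add: bcode_def list_decode_consc)
  qed
qed

lemma sum_unique_Suc:
  fixes P :: "nat \<Rightarrow> bool"
  assumes uniq: "\<And>m n. P m \<Longrightarrow> P n \<Longrightarrow> m = n"
  shows "(\<Sum>m<Suc s. if P m then Suc m else 0) = (if \<exists>m\<le>s. P m then Suc (THE m. m \<le> s \<and> P m) else 0)"
proof (cases "\<exists>m\<le>s. P m")
  case True
  then obtain m0 where m0: "m0 \<le> s" "P m0" by blast
  have "P m \<longleftrightarrow> m = m0" for m using m0 uniq by blast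
  then have "(\<Sum>m<Suc s. if P m then Suc m else 0) = (\<Sum>m<Suc s. if m = m0 then Suc m else 0)"
    by (intro sum.cong) auto
  also have "\<dots> = Suc m0" using m0 by (simp del: sum.lessThan_Suc add: sum.delta)
  also have "(THE m. m \<le> s \<and> P m) = m0" using m0 uniq by blast
  ultimately show ?thesis using True by simp
next
  case False
  then have "(\<Sum>m<Suc s. if P m then Suc m else 0) = (\<Sum>m<Suc s. 0)"
    by (intro sum.cong) auto
  then show ?thesis using False by simp
qed

lemma rf_bcode: "rf 2 (\<lambda>xs. bcode g (xs ! 0) (xs ! 1))"
proof (induction g)
  case Zero
  show ?case by (rule rf_cong[OF rf_const[of 2 1]]) (simp add: bcode_def)
next
  case Succ
  have "rf 2 (\<lambda>xs. Suc (Suc (hdc (xs ! 1))))" by (intro rf_Suc rf_hdc rf_proj) simp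
  then show ?case
    by (rule rf_cong) (metis bcode_def bev.simps(2) hdc_code list_decode_inverse ocode.simps(2))
next
  case (Proj i)
  have "rf 2 (\<lambda>xs. Suc (nthc (xs ! 1) i))" by (intro rf_Suc rf_nthc rf_proj rf_const) simp
  then show ?case
    by (rule rf_cong) (metis bcode_def bev.simps(3) nthc_code list_decode_inverse ocode.simps(2))
next
  case (Comp f gs)
  have gs: "rf 2 (\<lambda>xs. bcode g (xs ! 0) (xs ! 1))" if "g \<in> set gs" for g using Comp.IH(2) that by blast
  have fl: "rf k A \<Longrightarrow> rf k B \<Longrightarrow> rf k (\<lambda>xs. bcode f (A xs) (B xs))" for k A B
    by (rule rf_lift2[OF Comp.IH(1)])
  have "rf 2 (\<lambda>xs. if \<forall>g\<in>set gs. bcode g (xs ! 0) (xs ! 1) \<noteq> 0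
      then bcode f (xs ! 0) (list_encode (map (\<lambda>g. bcode g (xs ! 0) (xs ! 1) - 1) gs)) else 0)"
    by (intro rf_if rp_list_all gs fl rf_proj rf_const rf_list_map rf_sub) simp_all
  then show ?case
  proof (rule rf_cong)
    fix xs :: "nat list"
    let ?s = "xs ! 0" and ?l = "list_decode (xs ! 1)"
    have nz: "bcode g ?s (xs ! 1) \<noteq> 0 \<longleftrightarrow> bev g ?s ?l \<noteq> None" for g
      by (cases "bev g ?s ?l") (auto simp: bcode_def)
    have th: "bcode g ?s (xs ! 1) - 1 = the (bev g ?s ?l)" if "bev g ?s ?l \<noteq> None" for g
      using that by (auto simp: bcode_def)
    show "(if \<forall>g\<in>set gs. bcode g (xs ! 0) (xs ! 1) \<noteq> 0
      then bcode f (xs ! 0) (list_encode (map (\<lambda>g. bcode g (xs ! 0) (xs ! 1) - 1) gs)) else 0)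
      = bcode (Comp f gs) (xs ! 0) (xs ! 1)"
    proof (cases "\<forall>g\<in>set gs. bev g ?s ?l \<noteq> None")
      case True
      then have meq: "map (\<lambda>g. bcode g (xs ! 0) (xs ! 1) - 1) gs = map (\<lambda>g. the (bev g ?s ?l)) gs"
        using th by auto
      have "(if \<forall>g\<in>set gs. bcode g (xs ! 0) (xs ! 1) \<noteq> 0
        then bcode f (xs ! 0) (list_encode (map (\<lambda>g. bcode g (xs ! 0) (xs ! 1) - 1) gs)) else 0)
        = bcode f (xs ! 0) (list_encode (map (\<lambda>g. bcode g (xs ! 0) (xs ! 1) - 1) gs))"
        using True nz by simp
      also have "\<dots> = bcode f (xs ! 0) (list_encode (map (\<lambda>g. the (bev g ?s ?l)) gs))"
        by (simp only: meq)
      also have "\<dots> = bcode (Comp f gs) (xs ! 0) (xs ! 1)" using True by (simp add: bcode_def)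
      finally show ?thesis .
    next
      case False
      then show ?thesis using nz by (auto simp: bcode_def)
    qed
  qed
next
  case (PrimRec g h)
  have gl: "rf k A \<Longrightarrow> rf k B \<Longrightarrow> rf k (\<lambda>xs. bcode g (A xs) (B xs))" for k A B
    by (rule rf_lift2[OF PrimRec.IH(1)])
  have hl: "rf k A \<Longrightarrow> rf k B \<Longrightarrow> rf k (\<lambda>xs. bcode h (A xs) (B xs))" for k A B
    by (rule rf_lift2[OF PrimRec.IH(2)])
  define G where "G = (\<lambda>ys. bcode g (ys ! 0) (ys ! 1))"
  define H where "H = (\<lambda>ys::nat list. if ys ! 1 = 0 then 0 else bcode h (ys ! 2) (consc (ys ! 0) (consc (ys ! 1 - 1) (ys ! 3))))"
  have R: "rf 3 (\<lambda>ys. prr G H (hd ys) (tl ys))"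
    unfolding G_def H_def
    by (rule rf_primrec'[of 2 _ 4]) ((intro gl hl rf_if0 rf_proj rf_const rf_consc rf_sub; simp)+, simp_all)
  have "rf 2 (\<lambda>xs. if xs ! 1 = 0 then 0 else (\<lambda>ys. prr G H (hd ys) (tl ys)) [hdc (xs ! 1), xs ! 0, tlc (xs ! 1)])"
    by (intro rf_if0 rf_proj rf_const rf_comp3[OF R] rf_hdc rf_tlc) simp_all
  then show ?case
  proof (rule rf_cong)
    fix xs :: "nat list"
    let ?s = "xs ! 0" and ?c = "xs ! 1"
    show "(if ?c = 0 then 0 else (\<lambda>ys. prr G H (hd ys) (tl ys)) [hdc ?c, ?s, tlc ?c]) = bcode (PrimRec g h) ?s ?c"
    proof (cases "list_decode ?c")
      case Nil
      then have "?c = 0" by (metis list_decode_inverse list_encode.simps(1))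
      then show ?thesis by (simp add: bcode_def)
    next
      case (Cons n l)
      then have c: "?c = list_encode (n # l)" by (metis list_decode_inverse)
      then have "?c \<noteq> 0" by simp
      moreover have "hdc ?c = n" "tlc ?c = list_encode l" unfolding c by (simp_all add: hdc_def tlc_def)
      ultimately show ?thesis using Cons iter_prr[of g h] unfolding G_def H_def by (simp add: bcode_def)
    qed
  qed
next
  case (Mn f)
  have fl: "rf k A \<Longrightarrow> rf k B \<Longrightarrow> rf k (\<lambda>xs. bcode f (A xs) (B xs))" for k A B
    by (rule rf_lift2[OF Mn.IH])
  have "rf 2 (\<lambda>xs. \<Sum>m<Suc (xs ! 0). if bcode f (xs ! 0) (consc m (xs ! 1)) = 1 \<and>
        (\<forall>m'<m. 2 \<le> bcode f (xs ! 0) (consc m' (xs ! 1))) then Suc m else 0)"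
    by (intro rf_intros fl rf_consc) simp_all
  then show ?case
  proof (rule rf_cong)
    fix xs :: "nat list"
    let ?s = "xs ! 0" and ?c = "xs ! 1"
    define l where "l = list_decode ?c"
    have c: "?c = list_encode l" by (simp add: l_def)
    define good where "good m \<longleftrightarrow> bev f ?s (m # l) = Some 0 \<and> (\<forall>m'<m. \<exists>y. bev f ?s (m' # l) = Some (Suc y))" for m
    have e1: "bcode f ?s (consc m ?c) = 1 \<longleftrightarrow> bev f ?s (m # l) = Some 0" for m
      unfolding c consc_code bcode_def by (cases "bev f ?s (m # l)") auto
    have e2: "2 \<le> bcode f ?s (consc m ?c) \<longleftrightarrow> (\<exists>y. bev f ?s (m # l) = Some (Suc y))" for m
      unfolding c consc_code bcode_def by (cases "bev f ?s (m # l)") (auto, metis Suc_le_D not0_implies_Suc Suc_le_mono numeral_2_eq_2)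
    have cond: "(bcode f ?s (consc m ?c) = 1 \<and> (\<forall>m'<m. 2 \<le> bcode f ?s (consc m' ?c))) \<longleftrightarrow> good m" for m
      unfolding good_def e1 e2 by blast
    have uniq: "m = n" if "good m" "good n" for m n
      by (rule good_unique[of "\<lambda>m. bev f ?s (m # l)"]) (use that in \<open>simp_all add: good_def\<close>)
    have "(\<Sum>m<Suc ?s. if bcode f ?s (consc m ?c) = 1 \<and> (\<forall>m'<m. 2 \<le> bcode f ?s (consc m' ?c)) then Suc m else 0)
        = (\<Sum>m<Suc ?s. if good m then Suc m else 0)" unfolding cond by simp
    also have "\<dots> = (if \<exists>m\<le>?s. good m then Suc (THE m. m \<le> ?s \<and> good m) else 0)"
      by (rule sum_unique_Suc) (rule uniq)
    also have "\<dots> = bcode (Mn f) ?s ?c"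
      unfolding bcode_def l_def[symmetric] good_def bev.simps by (simp, blast)
    finally show "(\<Sum>m<Suc ?s. if bcode f ?s (consc m ?c) = 1 \<and> (\<forall>m'<m. 2 \<le> bcode f ?s (consc m' ?c)) then Suc m else 0)
        = bcode (Mn f) ?s ?c" .
  qed
qed


lemma rf_bcode_lift: "rf k A \<Longrightarrow> rf k B \<Longrightarrow> rf k (\<lambda>xs. bcode g (A xs) (B xs))"
  by (rule rf_lift2[OF rf_bcode])

lemma bcode_mono: "bcode g s c \<noteq> 0 \<Longrightarrow> s \<le> s' \<Longrightarrow> bcode g s' c = bcode g s c"
proof -
  assume "bcode g s c \<noteq> 0" "s \<le> s'"
  then obtain z where "bev g s (list_decode c) = Some z" unfolding bcode_def by (cases "bev g s (list_decode c)") auto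
  then show ?thesis using bev_mono[OF _ \<open>s \<le> s'\<close>] unfolding bcode_def by auto
qed

lemma ce_sigma:
  assumes "ce A"
  shows "\<exists>g. \<forall>x. x \<in> A \<longleftrightarrow> (\<exists>s. bcode g s (consc x 0) \<noteq> 0)"
proof -
  obtain f where f: "\<And>x. x \<in> A \<longleftrightarrow> (\<exists>y. eval f [x] y)" using assms unfolding ce_def by blast
  have "x \<in> A \<longleftrightarrow> (\<exists>s. bcode f s (consc x 0) \<noteq> 0)" for x
  proof -
    have c: "consc x 0 = list_encode [x]" by (simp add: consc_def)
    have "(\<exists>y. eval f [x] y) \<longleftrightarrow> (\<exists>s. bev f s [x] \<noteq> None)"
      using bev_sound bev_complete by blast
    also have "\<dots> \<longleftrightarrow> (\<exists>s. bcode f s (consc x 0) \<noteq> 0)"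
    proof
      assume "\<exists>s. bev f s [x] \<noteq> None"
      then obtain s y where "bev f s [x] = Some y" by blast
      then show "\<exists>s. bcode f s (consc x 0) \<noteq> 0" unfolding c bcode_def by (intro exI[of _ s]) simp
    next
      assume "\<exists>s. bcode f s (consc x 0) \<noteq> 0"
      then obtain s where "bcode f s (consc x 0) \<noteq> 0" by blast
      then have "bev f s [x] \<noteq> None" unfolding c bcode_def by (cases "bev f s [x]") auto
      then show "\<exists>s. bev f s [x] \<noteq> None" by blast
    qed
    finally show ?thesis using f by blast
  qed
  then show ?thesis by blast
qed

lemma ce_intro:
  assumes Q: "rp 2 (\<lambda>xs. Q (xs ! 0) (xs ! 1))"
  shows "ce {x. \<exists>s. Q s x}"
proof -
  have "rp 2 (\<lambda>xs. \<not> Q (xs ! 0) (xs ! 1))" by (rule rp_not[OF Q])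
  then obtain P where P: "\<And>xs. length xs = 2 \<Longrightarrow> eval P xs (if \<not> Q (xs ! 0) (xs ! 1) then 1 else 0)"
    unfolding rp_def rf_def by blast
  have P2: "eval P [s, x] (if Q s x then 0 else 1)" for s x
  proof -
    have "eval P [s, x] (if \<not> Q ([s, x] ! 0) ([s, x] ! 1) then 1 else 0)" by (rule P) simp
    then show ?thesis by (cases "Q s x") simp_all
  qed
  have "x \<in> {x. \<exists>s. Q s x} \<longleftrightarrow> (\<exists>y. eval (Mn P) [x] y)" for x
  proof
    assume "x \<in> {x. \<exists>s. Q s x}"
    then have ex: "\<exists>s. Q s x" by simp
    define n where "n = (LEAST s. Q s x)"
    have "Q n x" unfolding n_def using ex by (rule LeastI_ex)
    then have "eval P (n # [x]) 0" using P2[of n x] by simp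
    moreover have "\<forall>m<n. \<exists>y. eval P (m # [x]) (Suc y)"
    proof (intro allI impI)
      fix m assume "m < n"
      then have "\<not> Q m x" unfolding n_def using not_less_Least by blast
      then show "\<exists>y. eval P (m # [x]) (Suc y)" using P2[of m x] by auto
    qed
    ultimately show "\<exists>y. eval (Mn P) [x] y" using eval_mn by blast
  next
    assume "\<exists>y. eval (Mn P) [x] y"
    then obtain y where "eval (Mn P) [x] y" by blast
    then have "eval P (y # [x]) 0" by (cases rule: eval.cases) auto
    then have "Q y x"
    proof (cases "Q y x")
      case False
      assume e: "eval P (y # [x]) 0"
      have "eval P [y, x] 1" using P2[of y x] False by simp
      then have "(0::nat) = 1" using eval_det[OF e] by blast
      then show ?thesis by simp
    qed
    then show "x \<in> {x. \<exists>s. Q s x}" by blast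
  qed
  then show ?thesis unfolding ce_def by blast
qed

lemma tf_rel_unique:
  assumes 1: "tf_rel W p q" and 2: "tf_rel W p q'"
  shows "q = q'"
proof (rule ext)
  fix n
  have "\<exists>\<sigma>. prefix_of \<sigma> p \<and> code3 \<sigma> n (q n) \<in> W" using 1 unfolding tf_rel_def by blast
  then show "q n = q' n" using 2[unfolded tf_rel_def, rule_format, of n "q n"] by simp
qed

definition tfun :: "nat set \<Rightarrow> baire \<Rightarrow> baire option" where
  "tfun W p = (if \<exists>q. tf_rel W p q then Some (THE q. tf_rel W p q) else None)"

lemma tfun_Some: "tf_rel W p q \<Longrightarrow> tfun W p = Some q"
proof -
  assume q: "tf_rel W p q"
  have "(THE q. tf_rel W p q) = q"
  proof (rule the_equality)
    show "tf_rel W p q" by (rule q)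
    show "\<And>q'. tf_rel W p q' \<Longrightarrow> q' = q" by (rule tf_rel_unique[OF _ q])
  qed
  then show ?thesis unfolding tfun_def using q by auto
qed

lemma tfun_tf: "ce W \<Longrightarrow> turing_functional (tfun W)"
  unfolding turing_functional_def
proof (intro exI conjI allI)
  fix p q
  show "tfun W p = Some q \<longleftrightarrow> tf_rel W p q"
  proof
    assume a: "tfun W p = Some q"
    then obtain q0 where q0: "tf_rel W p q0" unfolding tfun_def by (auto split: if_splits)
    then have "tfun W p = Some q0" by (rule tfun_Some)
    then show "tf_rel W p q" using a q0 by simp
  qed (rule tfun_Some)
qed

definition chi :: "nat \<Rightarrow> baire" where "chi n = (\<lambda>k. if k = n then 1 else 0)"

lemma chi_inj: "chi n = chi m \<Longrightarrow> n = m"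
proof -
  assume "chi n = chi m"
  then have "chi n n = chi m n" by simp
  then show "n = m" unfolding chi_def by (cases "n = m") auto
qed

lemma rep_nat_chi: "rep_nat (chi n) = Some n"
proof -
  have "(THE k. chi n = chi k) = n" by (rule the_equality) (auto dest: chi_inj)
  then show ?thesis unfolding rep_nat_def chi_def[symmetric] by auto
qed

lemma rep_nat_Some: "rep_nat r = Some y \<Longrightarrow> r = chi y"
proof -
  assume a: "rep_nat r = Some y"
  then obtain n where n: "r = chi n" unfolding rep_nat_def chi_def[symmetric] by (auto split: if_splits)
  then show ?thesis using a rep_nat_chi by simp
qed

definition repc :: "nat \<Rightarrow> nat" where "repc l = rec_nat 0 (\<lambda>n r. consc 0 r) l"

lemma repc_code: "repc l = list_encode (replicate l 0)"
  by (induction l) (auto simp: repc_def consc_def)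

lemma rf_repc: "rf k A \<Longrightarrow> rf k (\<lambda>xs. repc (A xs))"
proof -
  have "rf 1 (\<lambda>xs. prr (\<lambda>_. 0) (\<lambda>ys. consc 0 (ys ! 1)) (hd xs) (tl xs))"
    by (rule rf_primrec'[of 0 _ 2]) ((intro rf_const rf_consc rf_proj; simp)+, simp_all)
  moreover have "prr (\<lambda>_. 0) (\<lambda>ys. consc 0 (ys ! 1)) n ys = repc n" for n ys
    by (induction n) (simp_all add: repc_def)
  ultimately have "rf 1 (\<lambda>xs. repc (hd xs))" by simp
  then have "rf 1 (\<lambda>xs. repc (xs ! 0))" by (rule rf_cong) (metis hd_conv_nth length_0_conv zero_neq_one)
  then show "rf k A \<Longrightarrow> ?thesis" by (rule rf_lift1)
qed

lemma code3_inj: "code3 \<sigma> n m = code3 \<sigma>' n' m' \<longleftrightarrow> \<sigma> = \<sigma>' \<and> n = n' \<and> m = m'"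
  unfolding code3_def prod_encode_eq by (simp, metis list_encode_inverse)


lemma cyl_measure: "emeasure lam (cyl \<tau>) \<le> ennreal ((1/2) ^ length \<tau>)"
proof -
  define M where "M = (\<lambda>_::nat. measure_pmf (pmf_of_set {0, 1::nat}))"
  define k where "k = length \<tau>"
  interpret P: product_prob_space M UNIV
    unfolding M_def by (rule product_prob_spaceI) (simp add: prob_space_measure_pmf)
  define E where "E = prod_emb UNIV M {..<k} (Pi\<^sub>E {..<k} (\<lambda>n. {\<tau> ! n}))"
  have lam: "lam = Pi\<^sub>M UNIV M" by (simp add: lam_def M_def)
  have Eset: "E \<in> sets lam" unfolding lam E_def
    by (rule sets_PiM_I) (auto simp: M_def)
  have sub: "cyl \<tau> \<subseteq> E"
  proof
    fix Y assume "Y \<in> cyl \<tau>"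
    then have "\<tau> = map Y [0..<k]" by (simp add: cyl_def prefix_of_def k_def)
    then have "\<forall>n<k. Y n = \<tau> ! n" by simp
    then show "Y \<in> E" unfolding E_def prod_emb_def by (auto simp: M_def space_PiM PiE_def extensional_def)
  qed
  have "emeasure lam E = (\<Prod>n\<in>{..<k}. emeasure (M n) {\<tau> ! n})"
    unfolding lam E_def by (rule P.emeasure_PiM_emb) (auto simp: M_def)
  also have "\<dots> \<le> (\<Prod>n\<in>{..<k}. ennreal (1/2))"
  proof (rule prod_mono_ennreal)
    fix n assume "n \<in> {..<k}"
    have "emeasure (M n) {\<tau> ! n} = ennreal (pmf (pmf_of_set {0, 1::nat}) (\<tau> ! n))"
      by (simp add: M_def emeasure_pmf_single)
    also have "\<dots> \<le> ennreal (1/2)" by (auto simp: pmf_of_set indicator_def)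
    finally show "emeasure (M n) {\<tau> ! n} \<le> ennreal (1/2)" .
  qed
  also have "\<dots> = ennreal ((1/2) ^ k)" by (simp only: prod_constant card_lessThan ennreal_power[symmetric])
  finally have "emeasure lam E \<le> ennreal ((1/2) ^ k)" .
  moreover have "emeasure lam (cyl \<tau>) \<le> emeasure lam E" by (rule emeasure_mono[OF sub Eset])
  ultimately show ?thesis unfolding k_def by (rule order_trans[rotated])
qed


definition Q2 :: "nat \<Rightarrow> bool" where
  "Q2 x \<longleftrightarrow> fst (prod_decode (snd (prod_decode x))) < lenc (fst (prod_decode x)) \<and>
     nthc (fst (prod_decode x)) (fst (prod_decode (snd (prod_decode x)))) = snd (prod_decode (snd (prod_decode x)))"

lemma ce_Q2: "ce {x. \<exists>s::nat. Q2 x}"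
proof -
  have "rp 2 (\<lambda>xs. Q2 (xs ! 1))" unfolding Q2_def
    by (intro rf_intros rf_fstd rf_sndd rf_lenc rf_nthc) simp_all
  then show ?thesis using ce_intro[of "\<lambda>s x. Q2 x"] by simp
qed

definition Q1 :: "recf \<Rightarrow> nat \<Rightarrow> bool" where
  "Q1 g x \<longleftrightarrow>
     lenc (snd (prod_decode (fst (prod_decode (fst (prod_decode (snd (prod_decode x))))))))
       \<le> lenc (fst (prod_decode x)) \<and>
     snd (prod_decode (snd (prod_decode x))) =
       (if (\<forall>j < lenc (snd (prod_decode (fst (prod_decode (fst (prod_decode (snd (prod_decode x)))))))).
              nthc (snd (prod_decode (fst (prod_decode (fst (prod_decode (snd (prod_decode x)))))))) j
              = nthc (fst (prod_decode x)) j)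
           \<and> bcode g (snd (prod_decode (fst (prod_decode (snd (prod_decode x))))))
                (consc (fst (prod_decode (fst (prod_decode (snd (prod_decode x)))))) 0) \<noteq> 0
        then Suc (fst (prod_decode (fst (prod_decode (fst (prod_decode (snd (prod_decode x))))))))
        else 0)"

lemma ce_Q1: "ce {x. \<exists>s::nat. Q1 g x}"
proof -
  have "rp 2 (\<lambda>xs. Q1 g (xs ! 1))" unfolding Q1_def
    by (intro rf_intros rf_fstd rf_sndd rf_lenc rf_nthc rf_bcode_lift rf_consc) simp_all
  then show ?thesis using ce_intro[of "\<lambda>s x. Q1 g x"] by simp
qed

lemma prefix_of_iff: "prefix_of \<sigma> X \<longleftrightarrow> (\<forall>j<length \<sigma>. \<sigma> ! j = X j)"
  unfolding prefix_of_def list_eq_iff_nth_eq by simp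

lemma Q2_code: "Q2 (code3 \<sigma> n m) \<longleftrightarrow> n < length \<sigma> \<and> \<sigma> ! n = m"
  unfolding Q2_def code3_def by (auto simp: lenc_code nthc_code arg_def)

lemma Q1_code: "Q1 g (code3 \<sigma> (prod_encode (prod_encode (i, list_encode \<tau>), s)) m) \<longleftrightarrow>
   length \<tau> \<le> length \<sigma> \<and>
   m = (if (\<forall>j<length \<tau>. \<tau> ! j = \<sigma> ! j) \<and> bcode g s (consc (prod_encode (i, list_encode \<tau>)) 0) \<noteq> 0 then Suc i else 0)"
proof -
  have "length \<tau> \<le> length \<sigma> \<Longrightarrow> (\<forall>j<length \<tau>. arg \<tau> j = arg \<sigma> j) \<longleftrightarrow> (\<forall>j<length \<tau>. \<tau> ! j = \<sigma> ! j)"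
    by (auto simp: arg_def)
  then show ?thesis unfolding Q1_def code3_def by (auto simp: lenc_code nthc_code)
qed

lemma k_form: "\<exists>i \<tau> s. k = prod_encode (prod_encode (i, list_encode \<tau>), s)"
proof -
  obtain a s where as: "prod_decode k = (a, s)" by (cases "prod_decode k")
  obtain i c where ic: "prod_decode a = (i, c)" by (cases "prod_decode a")
  have "k = prod_encode (a, s)" using as by (metis prod_decode_inverse)
  moreover have "a = prod_encode (i, list_encode (list_decode c))" using ic by (metis prod_decode_inverse list_decode_inverse)
  ultimately show ?thesis by blast
qed

definition fX :: "recf \<Rightarrow> baire \<Rightarrow> baire" where
  "fX g X k = (case prod_decode k of (a, s) \<Rightarrow> (case prod_decode a of (i, c) \<Rightarrow>
     if prefix_of (list_decode c) X \<and> bcode g s (consc a 0) \<noteq> 0 then Suc i else 0))"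

lemma fX_code: "fX g X (prod_encode (prod_encode (i, list_encode \<tau>), s)) =
   (if prefix_of \<tau> X \<and> bcode g s (consc (prod_encode (i, list_encode \<tau>)) 0) \<noteq> 0 then Suc i else 0)"
  unfolding fX_def by simp

lemma tf_rel_fX: "tf_rel {x. \<exists>s::nat. Q1 g x} X (fX g X)"
  unfolding tf_rel_def
proof (intro allI)
  fix k m
  obtain i \<tau> s where k: "k = prod_encode (prod_encode (i, list_encode \<tau>), s)" using k_form by blast
  show "fX g X k = m \<longleftrightarrow> (\<exists>\<sigma>. prefix_of \<sigma> X \<and> code3 \<sigma> k m \<in> {x. \<exists>s::nat. Q1 g x})"
  proof
    assume m: "fX g X k = m"
    define \<sigma> where "\<sigma> = map X [0..<length \<tau>]"
    have p: "prefix_of \<sigma> X" unfolding \<sigma>_def prefix_of_def by simp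
    have "(\<forall>j<length \<tau>. \<tau> ! j = \<sigma> ! j) \<longleftrightarrow> prefix_of \<tau> X"
      unfolding prefix_of_iff \<sigma>_def by simp
    then have "Q1 g (code3 \<sigma> k m)" unfolding k Q1_code using m[unfolded k fX_code]
      by (simp add: \<sigma>_def)
    then show "\<exists>\<sigma>. prefix_of \<sigma> X \<and> code3 \<sigma> k m \<in> {x. \<exists>s::nat. Q1 g x}" using p by blast
  next
    assume "\<exists>\<sigma>. prefix_of \<sigma> X \<and> code3 \<sigma> k m \<in> {x. \<exists>s::nat. Q1 g x}"
    then obtain \<sigma> where p: "prefix_of \<sigma> X" and q: "Q1 g (code3 \<sigma> k m)" by blast
    have len: "length \<tau> \<le> length \<sigma>" using q unfolding k Q1_code by simp
    have "(\<forall>j<length \<tau>. \<tau> ! j = \<sigma> ! j) \<longleftrightarrow> prefix_of \<tau> X"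
      using p len unfolding prefix_of_iff by auto
    then show "fX g X k = m" using q unfolding k Q1_code fX_code by simp
  qed
qed

lemma tf_rel_id: "tf_rel {x. \<exists>s::nat. Q2 x} r r"
  unfolding tf_rel_def
proof (intro allI)
  fix n m
  show "r n = m \<longleftrightarrow> (\<exists>\<sigma>. prefix_of \<sigma> r \<and> code3 \<sigma> n m \<in> {x. \<exists>s::nat. Q2 x})"
  proof
    assume "r n = m"
    then have "prefix_of (map r [0..<Suc n]) r \<and> Q2 (code3 (map r [0..<Suc n]) n m)"
      by (simp add: Q2_code prefix_of_def del: upt_Suc)
    then show "\<exists>\<sigma>. prefix_of \<sigma> r \<and> code3 \<sigma> n m \<in> {x. \<exists>s::nat. Q2 x}" by blast
  next
    assume "\<exists>\<sigma>. prefix_of \<sigma> r \<and> code3 \<sigma> n m \<in> {x. \<exists>s::nat. Q2 x}"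
    then obtain \<sigma> where "prefix_of \<sigma> r" "Q2 (code3 \<sigma> n m)" by blast
    then show "r n = m" unfolding Q2_code prefix_of_iff by auto
  qed
qed

lemma part1:
  assumes U: "universal_MLtest U"
  shows "strong_weihrauch_le rep_MLR rep_nat MLR (LAY U) rep_baire rep_nat CN_dom CN"
proof -
  have MLU: "MLtest U" using U unfolding universal_MLtest_def by blast
  define SU where "SU = {prod_encode (i, list_encode \<sigma>) | i \<sigma>. binary \<sigma> \<and> cyl \<sigma> \<subseteq> U i}"
  have "ce SU" using MLU unfolding MLtest_def SU_def by blast
  then obtain g where g: "\<And>x. x \<in> SU \<longleftrightarrow> (\<exists>s. bcode g s (consc x 0) \<noteq> 0)" using ce_sigma by blast
  have SU_mem: "prod_encode (i, list_encode \<tau>) \<in> SU \<longleftrightarrow> binary \<tau> \<and> cyl \<tau> \<subseteq> U i" for i \<tau>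
  proof
    assume "prod_encode (i, list_encode \<tau>) \<in> SU"
    then obtain i' \<sigma> where e: "prod_encode (i, list_encode \<tau>) = prod_encode (i', list_encode \<sigma>)"
      and b: "binary \<sigma> \<and> cyl \<sigma> \<subseteq> U i'" unfolding SU_def by blast
    from e have "i = i'" "\<tau> = \<sigma>" by (simp_all, metis list_encode_inverse)
    then show "binary \<tau> \<and> cyl \<tau> \<subseteq> U i" using b by simp
  qed (auto simp: SU_def)
  define W1 where "W1 = {x. \<exists>s::nat. Q1 g x}"
  define W2 where "W2 = {x. \<exists>s::nat. Q2 x}"
  have Phi: "tfun W1 X = Some (fX g X)" for X unfolding W1_def by (rule tfun_Some[OF tf_rel_fX])
  have Psi: "tfun W2 r = Some r" for r unfolding W2_def by (rule tfun_Some[OF tf_rel_id])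
  have key1: "fX g X \<in> CN_dom" if X: "X \<in> MLR" for X
  proof -
    have Xc: "X \<in> cantor" using X unfolding MLR_def by blast
    have "X \<notin> (\<Inter>i. U i)" using X MLU unfolding MLR_def by blast
    then obtain n where n: "X \<notin> U n" by blast
    have "fX g X k \<noteq> n + 1" for k
    proof
      assume fk: "fX g X k = n + 1"
      obtain i \<tau> s where k: "k = prod_encode (prod_encode (i, list_encode \<tau>), s)" using k_form by blast
      from fk have "prefix_of \<tau> X \<and> bcode g s (consc (prod_encode (i, list_encode \<tau>)) 0) \<noteq> 0 \<and> i = n"
        unfolding k fX_code by (simp split: if_splits)
      then have "prefix_of \<tau> X" "prod_encode (n, list_encode \<tau>) \<in> SU" using g by blast+
      then have "X \<in> cyl \<tau>" "cyl \<tau> \<subseteq> U n" using Xc SU_mem unfolding cyl_def by blast+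
      then show False using n by blast
    qed
    then show ?thesis unfolding CN_dom_def by blast
  qed
  have key2: "y \<in> LAY U X" if X: "X \<in> MLR" and y: "y \<in> CN (fX g X)" for X y
  proof (rule ccontr)
    assume "y \<notin> LAY U X"
    then have "X \<in> U y" unfolding LAY_def by blast
    moreover have "cantor_open (U y)" using MLU unfolding MLtest_def by blast
    ultimately obtain \<sigma> where \<sigma>: "binary \<sigma>" "prefix_of \<sigma> X" "cyl \<sigma> \<subseteq> U y"
      unfolding cantor_open_def by blast
    then have "prod_encode (y, list_encode \<sigma>) \<in> SU" using SU_mem by blast
    then obtain s where s: "bcode g s (consc (prod_encode (y, list_encode \<sigma>)) 0) \<noteq> 0" using g by blast
    have "fX g X (prod_encode (prod_encode (y, list_encode \<sigma>), s)) = y + 1"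
      unfolding fX_code using \<sigma>(2) s by simp
    then show False using y unfolding CN_def by blast
  qed
  show ?thesis unfolding strong_weihrauch_le_def
  proof (intro exI conjI allI impI)
    show "turing_functional (tfun W1)" unfolding W1_def by (rule tfun_tf[OF ce_Q1])
    show "turing_functional (tfun W2)" unfolding W2_def by (rule tfun_tf[OF ce_Q2])
    fix \<Gamma> assume G: "realizer rep_baire rep_nat CN_dom CN \<Gamma>"
    show "realizer rep_MLR rep_nat MLR (LAY U) (\<lambda>p. Option.bind (tfun W1 p) (\<lambda>p'. Option.bind (\<Gamma> p') (tfun W2)))"
      unfolding realizer_def
    proof (intro allI impI)
      fix p x assume px: "rep_MLR p = Some x \<and> x \<in> MLR"
      then have p: "p = x" "x \<in> MLR" unfolding rep_MLR_def by (auto split: if_splits)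
      have "rep_baire (fX g x) = Some (fX g x) \<and> fX g x \<in> CN_dom" using key1[OF p(2)] by (simp add: rep_baire_def)
      then obtain r y where r: "\<Gamma> (fX g x) = Some r" "rep_nat r = Some y" "y \<in> CN (fX g x)"
        using G unfolding realizer_def by blast
      show "\<exists>r y. Option.bind (tfun W1 p) (\<lambda>p'. Option.bind (\<Gamma> p') (tfun W2)) = Some r \<and> rep_nat r = Some y \<and> y \<in> LAY U x"
        using r key2[OF p(2) r(3)] by (simp add: p Phi Psi)
    qed
  qed
qed


definition Q3 :: "recf \<Rightarrow> nat \<Rightarrow> nat \<Rightarrow> bool" where
  "Q3 h s x \<longleftrightarrow> (\<forall>j<lenc (snd (prod_decode x)). nthc (snd (prod_decode x)) j \<le> 1) \<and>
     fst (prod_decode x) \<le> lenc (snd (prod_decode x)) \<and>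
     (\<forall>n<fst (prod_decode x). \<exists>l<Suc s. bcode h s (consc (prod_encode (repc l, prod_encode (n, nthc (snd (prod_decode x)) n))) 0) \<noteq> 0)"

lemma ce_Q3: "ce {x. \<exists>s. Q3 h s x}"
proof -
  have "rp 2 (\<lambda>xs. Q3 h (xs ! 0) (xs ! 1))" unfolding Q3_def
    by (intro rf_intros rf_fstd rf_sndd rf_lenc rf_nthc rf_bcode_lift rf_consc rf_penc rf_repc) simp_all
  then show ?thesis by (rule ce_intro)
qed

lemma binary_iff: "binary \<sigma> \<longleftrightarrow> (\<forall>j<length \<sigma>. \<sigma> ! j \<le> 1)"
proof
  assume "binary \<sigma>"
  then show "\<forall>j<length \<sigma>. \<sigma> ! j \<le> 1" unfolding binary_def using nth_mem by fastforce
next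
  assume a: "\<forall>j<length \<sigma>. \<sigma> ! j \<le> 1"
  show "binary \<sigma>" unfolding binary_def
  proof
    fix x assume "x \<in> set \<sigma>"
    then obtain j where "j < length \<sigma>" "x = \<sigma> ! j" by (auto simp: in_set_conv_nth)
    then have "x \<le> 1" using a by simp
    then show "x \<in> {0, 1}" by auto
  qed
qed

lemma ext_in_cyl:
  assumes "binary \<sigma>" "b \<le> 1"
  shows "(\<lambda>n. if n < length \<sigma> then \<sigma> ! n else b) \<in> cyl \<sigma>"
  using assms unfolding cyl_def cantor_def prefix_of_iff binary_iff by auto

lemma cyl_sub:
  assumes b: "binary \<sigma>" and sub: "cyl \<sigma> \<subseteq> cyl \<tau>"
  shows "length \<tau> \<le> length \<sigma> \<and> (\<forall>j<length \<tau>. \<sigma> ! j = \<tau> ! j)"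
proof -
  define Y where "Y b = (\<lambda>n. if n < length \<sigma> then \<sigma> ! n else b)" for b :: nat
  have Y: "Y b \<in> cyl \<tau>" if "b \<le> 1" for b using ext_in_cyl[OF b that] sub unfolding Y_def by blast
  then have p: "prefix_of \<tau> (Y b)" if "b \<le> 1" for b using that unfolding cyl_def by blast
  have len: "length \<tau> \<le> length \<sigma>"
  proof (rule ccontr)
    assume "\<not> length \<tau> \<le> length \<sigma>"
    then have l: "length \<sigma> < length \<tau>" by simp
    have "\<tau> ! length \<sigma> = Y 0 (length \<sigma>)" using p[of 0] l unfolding prefix_of_iff by auto
    moreover have "\<tau> ! length \<sigma> = Y 1 (length \<sigma>)" using p[of 1] l unfolding prefix_of_iff by auto
    ultimately show False unfolding Y_def by simp
  qed
  have "\<forall>j<length \<tau>. \<tau> ! j = Y 0 j" using p[of 0] unfolding prefix_of_iff by auto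
  then show ?thesis using len unfolding Y_def by auto
qed

lemma Q3_code: "Q3 h s (prod_encode (i, list_encode \<sigma>)) \<longleftrightarrow> binary \<sigma> \<and> i \<le> length \<sigma> \<and>
  (\<forall>n<i. \<exists>l<Suc s. bcode h s (consc (prod_encode (repc l, prod_encode (n, \<sigma> ! n))) 0) \<noteq> 0)"
proof -
  have a: "(\<forall>j<length \<sigma>. arg \<sigma> j \<le> 1) \<longleftrightarrow> binary \<sigma>" unfolding binary_iff arg_def by simp
  have b: "i \<le> length \<sigma> \<Longrightarrow> (\<forall>n<i. \<exists>l<Suc s. bcode h s (consc (prod_encode (repc l, prod_encode (n, arg \<sigma> n))) 0) \<noteq> 0)
     \<longleftrightarrow> (\<forall>n<i. \<exists>l<Suc s. bcode h s (consc (prod_encode (repc l, prod_encode (n, \<sigma> ! n))) 0) \<noteq> 0)"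
    unfolding arg_def by auto
  show ?thesis unfolding Q3_def prod_encode_inverse fst_conv snd_conv lenc_code nthc_code
    using a b by blast
qed

lemma comp_not_MLR:
  assumes tf: "turing_functional \<Phi>" and X: "\<Phi> (\<lambda>_. 0) = Some X"
  shows "X \<notin> MLR"
proof
  assume XM: "X \<in> MLR"
  then have Xc: "X \<in> cantor" unfolding MLR_def by blast
  obtain W where W: "ce W" "\<And>p q. \<Phi> p = Some q \<longleftrightarrow> tf_rel W p q" using tf unfolding turing_functional_def by blast
  have tr: "tf_rel W (\<lambda>_. 0) X" using W(2) X by blast
  obtain h where h: "\<And>y. y \<in> W \<longleftrightarrow> (\<exists>s. bcode h s (consc y 0) \<noteq> 0)" using ce_sigma[OF W(1)] by blast
  have pre0: "prefix_of \<sigma> (\<lambda>_. 0) \<longleftrightarrow> \<sigma> = replicate (length \<sigma>) 0" for \<sigma>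
    unfolding prefix_of_def by (simp add: map_replicate_const)
  have Xval: "X n = m \<longleftrightarrow> (\<exists>l. code3 (replicate l 0) n m \<in> W)" for n m
  proof -
    have "X n = m \<longleftrightarrow> (\<exists>\<sigma>. prefix_of \<sigma> (\<lambda>_. 0) \<and> code3 \<sigma> n m \<in> W)"
      using tr unfolding tf_rel_def by blast
    also have "\<dots> \<longleftrightarrow> (\<exists>l. code3 (replicate l 0) n m \<in> W)"
    proof
      assume "\<exists>\<sigma>. prefix_of \<sigma> (\<lambda>_. 0) \<and> code3 \<sigma> n m \<in> W"
      then obtain \<sigma> where "prefix_of \<sigma> (\<lambda>_. 0)" "code3 \<sigma> n m \<in> W" by blast
      then show "\<exists>l. code3 (replicate l 0) n m \<in> W" using pre0 by metis
    next
      assume "\<exists>l. code3 (replicate l 0) n m \<in> W"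
      then obtain l where "code3 (replicate l 0) n m \<in> W" by blast
      moreover have "prefix_of (replicate l 0) (\<lambda>_. 0)" using pre0 by simp
      ultimately show "\<exists>\<sigma>. prefix_of \<sigma> (\<lambda>_. 0) \<and> code3 \<sigma> n m \<in> W" by blast
    qed
    finally show ?thesis .
  qed
  have Xval2: "X n = m \<longleftrightarrow> (\<exists>l s. bcode h s (consc (prod_encode (repc l, prod_encode (n, m))) 0) \<noteq> 0)" for n m
    unfolding Xval h code3_def repc_code by blast
  define V where "V i = cyl (map X [0..<i])" for i
  have Xb: "binary (map X [0..<i])" for i
  proof -
    have all: "\<forall>n. X n \<in> {0, 1}" using Xc unfolding cantor_def by blast
    have "set (map X [0..<i]) \<subseteq> {0, 1}"
    proof
      fix t assume "t \<in> set (map X [0..<i])"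
      then obtain n where "t = X n" by auto
      then show "t \<in> {0, 1}" using all by simp
    qed
    then show ?thesis unfolding binary_def .
  qed
  have T: "{prod_encode (i, list_encode \<sigma>) | i \<sigma>. binary \<sigma> \<and> cyl \<sigma> \<subseteq> V i} = {x. \<exists>s. Q3 h s x}"
  proof (intro equalityI subsetI)
    fix x assume "x \<in> {prod_encode (i, list_encode \<sigma>) | i \<sigma>. binary \<sigma> \<and> cyl \<sigma> \<subseteq> V i}"
    then obtain i \<sigma> where x: "x = prod_encode (i, list_encode \<sigma>)" and b: "binary \<sigma>" and sub: "cyl \<sigma> \<subseteq> V i"
      by blast
    from cyl_sub[OF b sub[unfolded V_def]] have len: "i \<le> length \<sigma>" and eq: "\<forall>j<i. \<sigma> ! j = X j" by auto
    have "\<forall>n. \<exists>p. n < i \<longrightarrow> bcode h (snd p) (consc (prod_encode (repc (fst p), prod_encode (n, \<sigma> ! n))) 0) \<noteq> 0"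
    proof
      fix n
      show "\<exists>p. n < i \<longrightarrow> bcode h (snd p) (consc (prod_encode (repc (fst p), prod_encode (n, \<sigma> ! n))) 0) \<noteq> 0"
      proof (cases "n < i")
        case True
        then have "X n = \<sigma> ! n" using eq by simp
        then obtain l s where "bcode h s (consc (prod_encode (repc l, prod_encode (n, \<sigma> ! n))) 0) \<noteq> 0"
          using Xval2[of n "\<sigma> ! n"] by blast
        then show ?thesis by (intro exI[of _ "(l, s)"]) simp
      qed simp
    qed
    from choice[OF this] obtain pf where pf0: "\<forall>n. n < i \<longrightarrow> bcode h (snd (pf n)) (consc (prod_encode (repc (fst (pf n)), prod_encode (n, \<sigma> ! n))) 0) \<noteq> 0"
      by blast
    define s where "s = (\<Sum>n<i. fst (pf n) + snd (pf n))"
    have le: "fst (pf n) \<le> s \<and> snd (pf n) \<le> s" if "n < i" for n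
    proof -
      have "fst (pf n) + snd (pf n) \<le> s" unfolding s_def using that by (intro member_le_sum) auto
      then show ?thesis by simp
    qed
    have "\<forall>n<i. \<exists>l<Suc s. bcode h s (consc (prod_encode (repc l, prod_encode (n, \<sigma> ! n))) 0) \<noteq> 0"
    proof (intro allI impI)
      fix n assume n: "n < i"
      have a: "bcode h (snd (pf n)) (consc (prod_encode (repc (fst (pf n)), prod_encode (n, \<sigma> ! n))) 0) \<noteq> 0"
        using pf0 n by blast
      have "bcode h s (consc (prod_encode (repc (fst (pf n)), prod_encode (n, \<sigma> ! n))) 0) \<noteq> 0"
        using bcode_mono[OF a, of s] le[OF n] a by simp
      moreover have "fst (pf n) < Suc s" using le[OF n] by simp
      ultimately show "\<exists>l<Suc s. bcode h s (consc (prod_encode (repc l, prod_encode (n, \<sigma> ! n))) 0) \<noteq> 0" by blast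
    qed
    then have "Q3 h s x" unfolding x Q3_code using b len by blast
    then show "x \<in> {x. \<exists>s. Q3 h s x}" by blast
  next
    fix x assume "x \<in> {x. \<exists>s. Q3 h s x}"
    then obtain s where q: "Q3 h s x" by blast
    obtain i c where ic: "prod_decode x = (i, c)" by (cases "prod_decode x")
    define \<sigma> where "\<sigma> = list_decode c"
    have x: "x = prod_encode (i, list_encode \<sigma>)" unfolding \<sigma>_def using ic by (metis prod_decode_inverse list_decode_inverse)
    have q': "binary \<sigma> \<and> i \<le> length \<sigma> \<and>
      (\<forall>n<i. \<exists>l<Suc s. bcode h s (consc (prod_encode (repc l, prod_encode (n, \<sigma> ! n))) 0) \<noteq> 0)"
      using q unfolding x Q3_code .
    then have b: "binary \<sigma>" and len: "i \<le> length \<sigma>" by blast+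
    have eq: "X n = \<sigma> ! n" if n: "n < i" for n
    proof -
      obtain l where "bcode h s (consc (prod_encode (repc l, prod_encode (n, \<sigma> ! n))) 0) \<noteq> 0"
        using q' n by blast
      then show "X n = \<sigma> ! n" using Xval2[of n "\<sigma> ! n"] by blast
    qed
    have "cyl \<sigma> \<subseteq> V i"
    proof
      fix Y assume "Y \<in> cyl \<sigma>"
      then have Yc: "Y \<in> cantor" and Yp: "\<forall>j<length \<sigma>. \<sigma> ! j = Y j" unfolding cyl_def prefix_of_iff by auto
      have "prefix_of (map X [0..<i]) Y" unfolding prefix_of_iff using eq Yp len by auto
      then show "Y \<in> V i" unfolding V_def cyl_def using Yc by blast
    qed
    then show "x \<in> {prod_encode (i, list_encode \<sigma>) | i \<sigma>. binary \<sigma> \<and> cyl \<sigma> \<subseteq> V i}" using x b by blast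
  qed
  have MLV: "MLtest V" unfolding MLtest_def
  proof (intro conjI allI)
    fix i
    show "cantor_open (V i)" unfolding cantor_open_def
    proof
      show "V i \<subseteq> cantor" unfolding V_def cyl_def by blast
      show "\<forall>Y\<in>V i. \<exists>\<sigma>. binary \<sigma> \<and> prefix_of \<sigma> Y \<and> cyl \<sigma> \<subseteq> V i"
        using Xb unfolding V_def cyl_def by blast
    qed
    show "emeasure lam (V i) \<le> ennreal ((1 / 2) ^ i)" unfolding V_def using cyl_measure[of "map X [0..<i]"] by simp
  next
    show "ce {prod_encode (i, list_encode \<sigma>) | i \<sigma>. binary \<sigma> \<and> cyl \<sigma> \<subseteq> V i}" unfolding T by (rule ce_Q3)
  qed
  have "X \<in> (\<Inter>i. V i)" unfolding V_def cyl_def prefix_of_def using Xc by simp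
  then show False using XM MLV unfolding MLR_def by blast
qed

lemma part2:
  assumes U: "universal_MLtest U"
  shows "\<not> weihrauch_le rep_baire rep_nat CN_dom CN rep_MLR rep_nat MLR (LAY U)"
proof
  assume "weihrauch_le rep_baire rep_nat CN_dom CN rep_MLR rep_nat MLR (LAY U)"
  then obtain \<Phi> \<Psi> where tf: "turing_functional \<Phi>" and
    H: "\<And>\<Gamma>. realizer rep_MLR rep_nat MLR (LAY U) \<Gamma> \<Longrightarrow>
           realizer rep_baire rep_nat CN_dom CN
             (\<lambda>p. Option.bind (\<Phi> p) (\<lambda>p'. Option.bind (\<Gamma> p') (\<lambda>r. \<Psi> (bpair p r))))"
    unfolding weihrauch_le_def by blast
  have MLU: "MLtest U" using U unfolding universal_MLtest_def by blast
  define \<Gamma>0 where "\<Gamma>0 p = (if p \<in> MLR then Some (chi (SOME i. p \<notin> U i)) else None)" for p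
  have "realizer rep_MLR rep_nat MLR (LAY U) \<Gamma>0" unfolding realizer_def
  proof (intro allI impI)
    fix p x assume px: "rep_MLR p = Some x \<and> x \<in> MLR"
    then have p: "p = x" "x \<in> MLR" unfolding rep_MLR_def by (auto split: if_splits)
    have "x \<notin> (\<Inter>i. U i)" using p(2) MLU unfolding MLR_def by blast
    then have ex: "\<exists>i. x \<notin> U i" by blast
    have "x \<notin> U (SOME i. x \<notin> U i)" using someI_ex[OF ex] .
    then show "\<exists>r y. \<Gamma>0 p = Some r \<and> rep_nat r = Some y \<and> y \<in> LAY U x"
      using p by (auto simp: \<Gamma>0_def rep_nat_chi LAY_def)
  qed
  from H[OF this] have R: "realizer rep_baire rep_nat CN_dom CN
             (\<lambda>p. Option.bind (\<Phi> p) (\<lambda>p'. Option.bind (\<Gamma>0 p') (\<lambda>r. \<Psi> (bpair p r))))" .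
  have "(\<lambda>_. 0::nat) \<in> CN_dom" unfolding CN_dom_def by auto
  then have "rep_baire (\<lambda>_. 0) = Some (\<lambda>_. 0) \<and> (\<lambda>_. 0::nat) \<in> CN_dom" by (simp add: rep_baire_def)
  then obtain r y where "Option.bind (\<Phi> (\<lambda>_. 0)) (\<lambda>p'. Option.bind (\<Gamma>0 p') (\<lambda>r. \<Psi> (bpair (\<lambda>_. 0) r))) = Some r"
    using R unfolding realizer_def by blast
  then obtain X where X: "\<Phi> (\<lambda>_. 0) = Some X" and G: "\<Gamma>0 X \<noteq> None"
    by (cases "\<Phi> (\<lambda>_. 0)"; cases "\<Gamma>0 (the (\<Phi> (\<lambda>_. 0)))") auto
  have "X \<in> MLR" using G unfolding \<Gamma>0_def by (auto split: if_splits)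
  then show False using comp_not_MLR[OF tf X] by blast
qed

theorem proposition5p12:
  assumes "universal_MLtest U"
  shows "strong_weihrauch_le rep_MLR rep_nat MLR (LAY U) rep_baire rep_nat CN_dom CN
         \<and> \<not> weihrauch_le rep_baire rep_nat CN_dom CN rep_MLR rep_nat MLR (LAY U)"
  using part1[OF assms] part2[OF assms] by blast


end
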